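(* Let $n\ge 3$ and let $\mathcal N_{2n}$ be the neckband on $2n$ vertices. Then for every vertex $v$ of $\mathcal N_{2n}$, $\gamma_M(\mathcal N_{2n}-v)=\gamma_M(\mathcal N_{2n})-1$; that is, every vertex of $\mathcal N_{2n}$ is a 1-critical-vertex.
   Context: The neckband $\mathcal N_{2n}$ is the graph consisting of the $2n$-cycle $C_{2n}=v_1v_2\cdots v_{2n}v_1$ together with the $n$ chords $a_i=(v_{2i-1},v_{2i+2})$, $i=1,\dots,n$, where indices are taken modulo $2n$ (with representatives in $\{1,\dots,2n\}$). $\gamma_M(H)$ is the maximum genus of a connected graph $H$ (largest $k$ such that $H$ embeds cellularly in the orientable surface of genus $k$). A vertex $v$ is a 1-critical-vertex of $G$ if $G-v$ is connected and $\gamma_M(G-v)=\gamma_M(G)-1$. *)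

theory Defs
  imports Main
begin

text \<open>Simple graphs are given as a pair of a vertex set V and an edge set E,
  each edge being a 2-element set of vertices.\<close>

definition neighbors :: "'a set set \<Rightarrow> 'a \<Rightarrow> 'a set" where
  "neighbors E v = {u. u \<noteq> v \<and> {u, v} \<in> E}"

definition darts :: "'a set set \<Rightarrow> ('a \<times> 'a) set" where
  "darts E = {(u, v). u \<noteq> v \<and> {u, v} \<in> E}"

definition graph_connected :: "'a set \<Rightarrow> 'a set set \<Rightarrow> bool" where
  "graph_connected V E \<longleftrightarrow> V \<noteq> {} \<and>
     (\<forall>u\<in>V. \<forall>v\<in>V. (u, v) \<in> (darts E)\<^sup>*)"

definition delete_vertex :: "'a set \<Rightarrow> 'a set set \<Rightarrow> 'a \<Rightarrow> 'a set \<times> 'a set set" where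
  "delete_vertex V E v = (V - {v}, {e \<in> E. v \<notin> e})"

definition is_rotation_system :: "'a set \<Rightarrow> 'a set set \<Rightarrow> ('a \<Rightarrow> 'a \<Rightarrow> 'a) \<Rightarrow> bool" where
  "is_rotation_system V E \<rho> \<longleftrightarrow>
     (\<forall>v\<in>V. bij_betw (\<rho> v) (neighbors E v) (neighbors E v) \<and>
        (\<forall>x\<in>neighbors E v. \<forall>y\<in>neighbors E v. \<exists>k. (\<rho> v ^^ k) x = y))"

definition face_perm :: "('a \<Rightarrow> 'a \<Rightarrow> 'a) \<Rightarrow> 'a \<times> 'a \<Rightarrow> 'a \<times> 'a" where
  "face_perm \<rho> d = (snd d, \<rho> (snd d) (fst d))"

definition faces :: "'a set set \<Rightarrow> ('a \<Rightarrow> 'a \<Rightarrow> 'a) \<Rightarrow> ('a \<times> 'a) set set" where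
  "faces E \<rho> = (\<lambda>d. {(face_perm \<rho> ^^ k) d | k. True}) ` darts E"

definition num_faces :: "'a set set \<Rightarrow> ('a \<Rightarrow> 'a \<Rightarrow> 'a) \<Rightarrow> nat" where
  "num_faces E \<rho> = (if E = {} then 1 else card (faces E \<rho>))"

text \<open>Genus of the cellular orientable embedding determined by a rotation system
  (Euler's formula  |V| - |E| + F = 2 - 2g).\<close>

definition emb_genus :: "'a set \<Rightarrow> 'a set set \<Rightarrow> ('a \<Rightarrow> 'a \<Rightarrow> 'a) \<Rightarrow> int" where
  "emb_genus V E \<rho> = (2 - int (card V) + int (card E) - int (num_faces E \<rho>)) div 2"

definition max_genus :: "'a set \<Rightarrow> 'a set set \<Rightarrow> int" where
  "max_genus V E = Max {emb_genus V E \<rho> | \<rho>. is_rotation_system V E \<rho>}"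

text \<open>The neckband N_{2n}: vertices 1..2n, cycle edges {i, i+1} (mod 2n), and
  chords a_i = {2i-1, 2i+2} (indices mod 2n, representatives in 1..2n).\<close>

definition neckband_V :: "nat \<Rightarrow> nat set" where
  "neckband_V n = {1..2*n}"

definition neckband_E :: "nat \<Rightarrow> nat set set" where
  "neckband_E n =
     {{i, i mod (2*n) + 1} | i. i \<in> {1..2*n}} \<union>
     {{2*i - 1, (2*i + 1) mod (2*n) + 1} | i. i \<in> {1..n}}"

end

theory Submission
  imports Defs
begin

definition orb :: "('b \<Rightarrow> 'b) \<Rightarrow> 'b \<Rightarrow> 'b set" where
  "orb f d = {(f ^^ k) d | k. True}"

lemma faces_orb: "faces E \<rho> = orb (face_perm \<rho>) ` darts E"
  unfolding faces_def orb_def by simp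

lemma orb_self: "d \<in> orb f d"
  unfolding orb_def by (auto intro: exI[of _ 0])

lemma orb_step: "x \<in> orb f d \<Longrightarrow> f x \<in> orb f d"
proof -
  assume "x \<in> orb f d"
  then obtain k where "x = (f ^^ k) d" unfolding orb_def by auto
  then have "f x = (f ^^ Suc k) d" by simp
  then show ?thesis unfolding orb_def by blast
qed

lemma orb_trans: "x \<in> orb f d \<Longrightarrow> orb f x \<subseteq> orb f d"
proof
  fix y assume "x \<in> orb f d" "y \<in> orb f x"
  then obtain k j where "x = (f ^^ k) d" "y = (f ^^ j) x" unfolding orb_def by auto
  then have "y = (f ^^ (j + k)) d" by (simp add: funpow_add)
  then show "y \<in> orb f d" unfolding orb_def by auto
qed

lemma funpow_in: "f ` D \<subseteq> D \<Longrightarrow> d \<in> D \<Longrightarrow> (f ^^ k) d \<in> D"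
  by (induction k) (simp_all add: image_subset_iff)

lemma orb_sub: "f ` D \<subseteq> D \<Longrightarrow> d \<in> D \<Longrightarrow> orb f d \<subseteq> D"
proof
  fix x assume "f ` D \<subseteq> D" "d \<in> D" "x \<in> orb f d"
  then show "x \<in> D" unfolding orb_def using funpow_in[of f D d] by auto
qed

lemma inj_funpow: "f ` D \<subseteq> D \<Longrightarrow> inj_on f D \<Longrightarrow> inj_on (f ^^ k) D"
proof (induction k)
  case 0 then show ?case by simp
next
  case (Suc k)
  have "inj_on (f \<circ> (f ^^ k)) D"
  proof (rule comp_inj_on)
    show "inj_on (f ^^ k) D" using Suc by simp
    have "(f ^^ k) ` D \<subseteq> D" using funpow_in[OF Suc.prems(1)] by blast
    then show "inj_on f ((f ^^ k) ` D)" by (rule inj_on_subset[OF Suc.prems(2)])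
  qed
  then show ?case by (simp add: comp_def)
qed

lemma period:
  assumes "finite D" "f ` D \<subseteq> D" "inj_on f D" "d \<in> D"
  shows "\<exists>m>0. (f ^^ m) d = d"
proof -
  have "\<not> inj_on (\<lambda>k. (f ^^ k) d) {0..card D}"
  proof
    assume "inj_on (\<lambda>k. (f ^^ k) d) {0..card D}"
    then have c1: "card ((\<lambda>k. (f ^^ k) d) ` {0..card D}) = card {0..card D}" by (rule card_image)
    have "(\<lambda>k. (f ^^ k) d) ` {0..card D} \<subseteq> D" using funpow_in[OF assms(2,4)] by blast
    then have "card ((\<lambda>k. (f ^^ k) d) ` {0..card D}) \<le> card D" by (rule card_mono[OF assms(1)])
    then show False using c1 by simp
  qed
  then obtain i j where ij: "i \<le> card D" "j \<le> card D" "i \<noteq> j" "(f ^^ i) d = (f ^^ j) d"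
    unfolding inj_on_def by force
  have key: "\<exists>m>0. (f ^^ m) d = d" if "i < j" "(f ^^ i) d = (f ^^ j) d" for i j
  proof -
    have e1: "(f ^^ i) ((f ^^ (j - i)) d) = (f ^^ (i + (j - i))) d" by (simp add: funpow_add)
    have e2: "i + (j - i) = j" using that(1) by simp
    have e3: "(f ^^ i) ((f ^^ (j - i)) d) = (f ^^ i) d" using e1 that(2) unfolding e2 by simp
    have e4: "inj_on (f ^^ i) D" by (rule inj_funpow[OF assms(2,3)])
    have e5: "(f ^^ (j - i)) d \<in> D" by (rule funpow_in[OF assms(2,4)])
    have "(f ^^ (j - i)) d = d" using inj_onD[OF e4 e3 e5 assms(4)] .
    then show ?thesis using that(1) by (intro exI[of _ "j - i"]) auto
  qed
  show ?thesis
  proof (cases "i < j")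
    case True then show ?thesis using key ij by blast
  next
    case False then have "j < i" using ij(3) by simp
    then show ?thesis by (rule key) (use ij(4) in simp)
  qed
qed

lemma orb_sym:
  assumes "finite D" "f ` D \<subseteq> D" "inj_on f D" "d \<in> D" "x \<in> orb f d"
  shows "orb f x = orb f d"
proof (rule equalityI)
  show "orb f x \<subseteq> orb f d" using orb_trans assms(5) .
  from assms(5) obtain k where k: "x = (f ^^ k) d" unfolding orb_def by blast
  from period[OF assms(1-4)] obtain m where m: "m > 0" "(f ^^ m) d = d" by blast
  have mm: "(f ^^ (m * j)) d = d" for j
  proof (induction j)
    case 0 show ?case by simp
  next
    case (Suc j)
    have "(f ^^ (m * Suc j)) d = (f ^^ m) ((f ^^ (m * j)) d)"
      by (simp only: mult_Suc_right funpow_add comp_apply)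
    then show ?case using Suc.IH m(2) by simp
  qed
  have kle: "k \<le> m * (k + 1)"
  proof -
    have "1 \<le> m" using m(1) by simp
    then have "1 * (k + 1) \<le> m * (k + 1)" by (rule mult_le_mono1)
    then have "k + 1 \<le> m * (k + 1)" by (simp only: mult_1)
    then show ?thesis by linarith
  qed
  have "(f ^^ (m * (k + 1) - k)) x = (f ^^ (m * (k + 1) - k)) ((f ^^ k) d)" using k by simp
  also have "\<dots> = (f ^^ (m * (k + 1) - k + k)) d" by (simp only: funpow_add comp_apply)
  also have "m * (k + 1) - k + k = m * (k + 1)" using kle by linarith
  also have "(f ^^ (m * (k + 1))) d = d" by (rule mm)
  finally have "(f ^^ (m * (k + 1) - k)) x = d" .
  then have "d \<in> orb f x" unfolding orb_def by blast
  then show "orb f d \<subseteq> orb f x" by (rule orb_trans)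
qed

lemma darts_iff: "(a, b) \<in> darts E \<longleftrightarrow> b \<in> neighbors E a"
  unfolding darts_def neighbors_def by (auto simp: insert_commute)

lemma darts_sub:
  assumes "\<forall>e\<in>E. e \<subseteq> V"
  shows "darts E \<subseteq> V \<times> V"
  using assms unfolding darts_def by auto

lemma neighbors_sub:
  assumes "\<forall>e\<in>E. e \<subseteq> V"
  shows "neighbors E a \<subseteq> V"
  using assms unfolding neighbors_def by auto

lemma neighbors_out:
  assumes "\<forall>e\<in>E. e \<subseteq> V" "a \<notin> V"
  shows "neighbors E a = {}"
  using assms unfolding neighbors_def by auto

lemma face_perm_darts:
  assumes "is_rotation_system V E \<rho>" "\<forall>e\<in>E. e \<subseteq> V"
  shows "face_perm \<rho> ` darts E \<subseteq> darts E"
proof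
  fix y assume "y \<in> face_perm \<rho> ` darts E"
  then obtain a b where ab: "(a, b) \<in> darts E" "y = (b, \<rho> b a)" unfolding face_perm_def by auto
  have "b \<in> V" using darts_sub[OF assms(2)] ab(1) by auto
  have "a \<in> neighbors E b" using ab(1) darts_iff[of a b E] darts_iff[of b a E]
    unfolding darts_def neighbors_def by (auto simp: insert_commute)
  then have "\<rho> b a \<in> neighbors E b" using assms(1) \<open>b \<in> V\<close>
    unfolding is_rotation_system_def bij_betw_def by blast
  then show "y \<in> darts E" using ab(2) by (simp add: darts_iff)
qed

lemma face_perm_inj:
  assumes "is_rotation_system V E \<rho>" "\<forall>e\<in>E. e \<subseteq> V"
  shows "inj_on (face_perm \<rho>) (darts E)"
proof (rule inj_onI)
  fix x y assume xy: "x \<in> darts E" "y \<in> darts E" "face_perm \<rho> x = face_perm \<rho> y"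
  obtain a b where x: "x = (a, b)" by (cases x)
  obtain a' b' where y: "y = (a', b')" by (cases y)
  have bb: "b = b'" "\<rho> b a = \<rho> b a'" using xy(3) unfolding x y face_perm_def by auto
  have "b \<in> V" using darts_sub[OF assms(2)] xy(1) x by auto
  have "a \<in> neighbors E b" "a' \<in> neighbors E b" using xy(1,2) unfolding x y bb(1) darts_def neighbors_def
    by (auto simp: insert_commute)
  moreover have "inj_on (\<rho> b) (neighbors E b)" using assms(1) \<open>b \<in> V\<close>
    unfolding is_rotation_system_def bij_betw_def by blast
  ultimately have "a = a'" using bb(2) unfolding inj_on_def by blast
  then show "x = y" using x y bb(1) by simp
qed

lemma finite_darts:
  assumes "finite V" "\<forall>e\<in>E. e \<subseteq> V"
  shows "finite (darts E)"
  using darts_sub[OF assms(2)] assms(1) by (meson finite_SigmaI finite_subset)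

lemma faces_card_le:
  assumes "is_rotation_system V E \<rho>" "\<forall>e\<in>E. e \<subseteq> V" "finite V"
    and "A \<subseteq> darts E" "finite A"
    and "\<forall>d\<in>darts E. \<exists>d0\<in>A. d \<in> orb (face_perm \<rho>) d0"
  shows "card (faces E \<rho>) \<le> card A"
proof -
  have "faces E \<rho> \<subseteq> orb (face_perm \<rho>) ` A"
  proof
    fix F assume "F \<in> faces E \<rho>"
    then obtain d where d: "d \<in> darts E" "F = orb (face_perm \<rho>) d" unfolding faces_orb by auto
    then obtain d0 where d0: "d0 \<in> A" "d \<in> orb (face_perm \<rho>) d0" using assms(6) by blast
    have "orb (face_perm \<rho>) d = orb (face_perm \<rho>) d0"
      using orb_sym[OF finite_darts[OF assms(3,2)] face_perm_darts[OF assms(1,2)]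
          face_perm_inj[OF assms(1,2)] _ d0(2)] d0(1) assms(4) by blast
    then show "F \<in> orb (face_perm \<rho>) ` A" using d0(1) d(2) by blast
  qed
  then have "card (faces E \<rho>) \<le> card (orb (face_perm \<rho>) ` A)"
    using assms(5) by (intro card_mono) auto
  also have "\<dots> \<le> card A" using assms(5) by (rule card_image_le)
  finally show ?thesis .
qed

lemma num_faces_ge1:
  assumes "finite V" "\<forall>e\<in>E. e \<subseteq> V" "darts E \<noteq> {}"
  shows "num_faces E \<rho> \<ge> 1"
proof -
  have "E \<noteq> {}" using assms(3) unfolding darts_def by auto
  have "finite (faces E \<rho>)" unfolding faces_orb using finite_darts[OF assms(1,2)] by simp
  moreover have "faces E \<rho> \<noteq> {}" unfolding faces_orb using assms(3) by simp
  ultimately show ?thesis unfolding num_faces_def using \<open>E \<noteq> {}\<close>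
    by (simp add: Suc_leI card_gt_0_iff)
qed

lemma num_faces_le:
  assumes "finite V" "\<forall>e\<in>E. e \<subseteq> V" "darts E \<noteq> {}"
  shows "num_faces E \<rho> \<le> card (darts E)"
proof -
  have "E \<noteq> {}" using assms(3) unfolding darts_def by auto
  then show ?thesis unfolding num_faces_def faces_orb
    using card_image_le[OF finite_darts[OF assms(1,2)]] by simp
qed

lemma max_genus_eq:
  assumes "finite V" "\<forall>e\<in>E. e \<subseteq> V" "darts E \<noteq> {}"
    and "is_rotation_system V E \<rho>0"
    and "emb_genus V E \<rho>0 \<ge> (1 - int (card V) + int (card E)) div 2"
  shows "max_genus V E = (1 - int (card V) + int (card E)) div 2"
proof -
  let ?U = "(1 - int (card V) + int (card E)) div 2"
  let ?L = "(2 - int (card V) + int (card E) - int (card (darts E))) div 2"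
  let ?S = "{emb_genus V E \<rho> | \<rho>. is_rotation_system V E \<rho>}"
  have up: "emb_genus V E \<rho> \<le> ?U" for \<rho>
  proof -
    have "int (num_faces E \<rho>) \<ge> 1" using num_faces_ge1[OF assms(1-3)] by simp
    then show ?thesis unfolding emb_genus_def by (intro zdiv_mono1) linarith+
  qed
  have lo: "emb_genus V E \<rho> \<ge> ?L" for \<rho>
  proof -
    have "int (num_faces E \<rho>) \<le> int (card (darts E))" using num_faces_le[OF assms(1-3)] by simp
    then show ?thesis unfolding emb_genus_def by (intro zdiv_mono1) linarith+
  qed
  have fin: "finite ?S"
    by (rule finite_subset[of _ "{?L..?U}"]) (use up lo in auto)
  have eq: "emb_genus V E \<rho>0 = ?U" using up[of \<rho>0] assms(5) by linarith
  have "?U \<in> ?S" by (intro CollectI exI[of _ \<rho>0]) (simp add: eq assms(4))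
  then show ?thesis unfolding max_genus_def using fin up by (intro Max_eqI) auto
qed

definition tr_rot :: "('a \<Rightarrow> 'b) \<Rightarrow> 'a set \<Rightarrow> ('a \<Rightarrow> 'a \<Rightarrow> 'a) \<Rightarrow> 'b \<Rightarrow> 'b \<Rightarrow> 'b" where
  "tr_rot \<psi> V \<rho> w u = \<psi> (\<rho> (inv_into V \<psi> w) (inv_into V \<psi> u))"

lemma compr_img: "{h (g k) | k. True} = h ` {g k | k. True}"
  by blast

locale transp =
  fixes \<psi> :: "'a \<Rightarrow> 'b" and V :: "'a set" and E :: "'a set set"
  assumes inj: "inj_on \<psi> V" and sub: "\<forall>e\<in>E. e \<subseteq> V"
begin

lemma sub': "\<forall>e\<in>(`) \<psi> ` E. e \<subseteq> \<psi> ` V"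
  using sub by auto

lemma inv_psi[simp]: "a \<in> V \<Longrightarrow> inv_into V \<psi> (\<psi> a) = a"
  using inj by (rule inv_into_f_f)

lemma psi_eq[simp]: "a \<in> V \<Longrightarrow> b \<in> V \<Longrightarrow> \<psi> a = \<psi> b \<longleftrightarrow> a = b"
  using inj unfolding inj_on_def by blast

lemma edge_img_iff:
  assumes "a \<in> V" "b \<in> V"
  shows "{\<psi> a, \<psi> b} \<in> (`) \<psi> ` E \<longleftrightarrow> {a, b} \<in> E"
proof
  assume "{\<psi> a, \<psi> b} \<in> (`) \<psi> ` E"
  then obtain e where e: "e \<in> E" "\<psi> ` e = \<psi> ` {a, b}" by auto
  have "e \<subseteq> V" using sub e(1) by auto
  have ab: "{a, b} \<subseteq> V" using assms by simp
  have "e = {a, b}" using iffD1[OF inj_on_image_eq_iff[OF inj \<open>e \<subseteq> V\<close> ab] e(2)] .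
  then show "{a, b} \<in> E" using e(1) by simp
next
  assume "{a, b} \<in> E"
  then have "\<psi> ` {a, b} \<in> (`) \<psi> ` E" by (rule imageI)
  then show "{\<psi> a, \<psi> b} \<in> (`) \<psi> ` E" by simp
qed

lemma neighbors_img:
  assumes "a \<in> V"
  shows "neighbors ((`) \<psi> ` E) (\<psi> a) = \<psi> ` neighbors E a"
proof
  show "neighbors ((`) \<psi> ` E) (\<psi> a) \<subseteq> \<psi> ` neighbors E a"
  proof
    fix u' assume "u' \<in> neighbors ((`) \<psi> ` E) (\<psi> a)"
    then have u': "u' \<noteq> \<psi> a" "{u', \<psi> a} \<in> (`) \<psi> ` E" unfolding neighbors_def by auto
    then have "u' \<in> \<psi> ` V" using sub' by blast
    then obtain u where u: "u \<in> V" "u' = \<psi> u" by auto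
    have "{u, a} \<in> E" using u' edge_img_iff[OF u(1) assms] u(2) by simp
    moreover have "u \<noteq> a" using u'(1) u(2) by auto
    ultimately show "u' \<in> \<psi> ` neighbors E a" using u(2) unfolding neighbors_def by auto
  qed
next
  show "\<psi> ` neighbors E a \<subseteq> neighbors ((`) \<psi> ` E) (\<psi> a)"
  proof
    fix u' assume "u' \<in> \<psi> ` neighbors E a"
    then obtain u where u: "u \<in> neighbors E a" "u' = \<psi> u" by auto
    have uV: "u \<in> V" using neighbors_sub[OF sub] u(1) by auto
    have "{u, a} \<in> E" "u \<noteq> a" using u(1) unfolding neighbors_def by auto
    then show "u' \<in> neighbors ((`) \<psi> ` E) (\<psi> a)"
      using edge_img_iff[OF uV assms] u(2) uV assms unfolding neighbors_def by auto
  qed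
qed

lemma rot_transport:
  assumes rot: "is_rotation_system V E \<rho>"
  shows "is_rotation_system (\<psi> ` V) ((`) \<psi> ` E) (tr_rot \<psi> V \<rho>)"
  unfolding is_rotation_system_def
proof (rule ballI, rule conjI)
  fix w assume "w \<in> \<psi> ` V"
  then obtain a where a: "a \<in> V" "w = \<psi> a" by auto
  let ?N = "neighbors E a"
  have NV: "?N \<subseteq> V" using neighbors_sub[OF sub] .
  have bij: "bij_betw (\<rho> a) ?N ?N" and cyc: "\<forall>x\<in>?N. \<forall>y\<in>?N. \<exists>k. (\<rho> a ^^ k) x = y"
    using rot a(1) unfolding is_rotation_system_def by auto
  have tr: "tr_rot \<psi> V \<rho> w (\<psi> u) = \<psi> (\<rho> a u)" if "u \<in> ?N" for u
    using that NV a unfolding tr_rot_def by auto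
  have NN: "neighbors ((`) \<psi> ` E) w = \<psi> ` ?N" using neighbors_img[OF a(1)] a(2) by simp
  have rin: "\<rho> a u \<in> ?N" if "u \<in> ?N" for u using bij that unfolding bij_betw_def by auto
  show "bij_betw (tr_rot \<psi> V \<rho> w) (neighbors ((`) \<psi> ` E) w) (neighbors ((`) \<psi> ` E) w)"
    unfolding NN bij_betw_def
  proof
    show "inj_on (tr_rot \<psi> V \<rho> w) (\<psi> ` ?N)"
    proof (rule inj_onI)
      fix x y assume "x \<in> \<psi> ` ?N" "y \<in> \<psi> ` ?N" "tr_rot \<psi> V \<rho> w x = tr_rot \<psi> V \<rho> w y"
      then obtain u v where uv: "u \<in> ?N" "v \<in> ?N" "x = \<psi> u" "y = \<psi> v"
        "\<psi> (\<rho> a u) = \<psi> (\<rho> a v)" using tr by auto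
      have "\<rho> a u \<in> V" "\<rho> a v \<in> V" using rin uv(1,2) NV by auto
      then have "\<rho> a u = \<rho> a v" using uv(5) by simp
      then have "u = v" using bij uv(1,2) unfolding bij_betw_def inj_on_def by blast
      then show "x = y" using uv by simp
    qed
    have "tr_rot \<psi> V \<rho> w ` \<psi> ` ?N = \<psi> ` \<rho> a ` ?N"
      unfolding image_image using tr by (intro image_cong) auto
    also have "\<dots> = \<psi> ` ?N" using bij unfolding bij_betw_def by simp
    finally show "tr_rot \<psi> V \<rho> w ` \<psi> ` ?N = \<psi> ` ?N" .
  qed
  have pw: "(tr_rot \<psi> V \<rho> w ^^ k) (\<psi> u) = \<psi> ((\<rho> a ^^ k) u)" if "u \<in> ?N" for u k
  proof (induction k)
    case 0 show ?case by simp
  next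
    case (Suc k)
    have "(\<rho> a ^^ k) u \<in> ?N" using funpow_in[of "\<rho> a" ?N u k] rin that by blast
    then show ?case using Suc tr by simp
  qed
  show "\<forall>x\<in>neighbors ((`) \<psi> ` E) w. \<forall>y\<in>neighbors ((`) \<psi> ` E) w.
          \<exists>k. (tr_rot \<psi> V \<rho> w ^^ k) x = y"
    unfolding NN
  proof (intro ballI)
    fix x y assume "x \<in> \<psi> ` ?N" "y \<in> \<psi> ` ?N"
    then obtain u v where uv: "u \<in> ?N" "v \<in> ?N" "x = \<psi> u" "y = \<psi> v" by auto
    then obtain k where "(\<rho> a ^^ k) u = v" using cyc by blast
    then have "(tr_rot \<psi> V \<rho> w ^^ k) x = y" using pw[OF uv(1), of k] uv by simp
    then show "\<exists>k. (tr_rot \<psi> V \<rho> w ^^ k) x = y" by blast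
  qed
qed

lemma darts_img: "darts ((`) \<psi> ` E) = map_prod \<psi> \<psi> ` darts E"
proof
  show "darts ((`) \<psi> ` E) \<subseteq> map_prod \<psi> \<psi> ` darts E"
  proof
    fix d assume d: "d \<in> darts ((`) \<psi> ` E)"
    then obtain x y where xy: "d = (x, y)" "x \<noteq> y" "{x, y} \<in> (`) \<psi> ` E" unfolding darts_def by auto
    then obtain e where e: "e \<in> E" "{x, y} = \<psi> ` e" by auto
    have "e \<subseteq> V" using sub e(1) by auto
    have "x \<in> \<psi> ` e" "y \<in> \<psi> ` e" using e(2) by (metis insertI1, metis insertI1 insertI2)
    then have "x \<in> \<psi> ` V" "y \<in> \<psi> ` V" using \<open>e \<subseteq> V\<close> by auto
    then obtain a b where ab: "a \<in> V" "b \<in> V" "x = \<psi> a" "y = \<psi> b" by auto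
    then have "(a, b) \<in> darts E" using xy edge_img_iff[OF ab(1,2)] unfolding darts_def by auto
    then show "d \<in> map_prod \<psi> \<psi> ` darts E" using xy(1) ab by force
  qed
next
  show "map_prod \<psi> \<psi> ` darts E \<subseteq> darts ((`) \<psi> ` E)"
  proof
    fix d assume "d \<in> map_prod \<psi> \<psi> ` darts E"
    then obtain a b where ab: "(a, b) \<in> darts E" "d = (\<psi> a, \<psi> b)" by auto
    then have "a \<in> V" "b \<in> V" using darts_sub[OF sub] by auto
    then show "d \<in> darts ((`) \<psi> ` E)" using ab edge_img_iff unfolding darts_def by auto
  qed
qed

lemma faces_transport:
  assumes rot: "is_rotation_system V E \<rho>" and fin: "finite V"
  shows "num_faces ((`) \<psi> ` E) (tr_rot \<psi> V \<rho>) \<le> num_faces E \<rho>"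
proof -
  let ?f = "face_perm \<rho>" and ?g = "face_perm (tr_rot \<psi> V \<rho>)" and ?m = "map_prod \<psi> \<psi>"
  have cl: "?f ` darts E \<subseteq> darts E" by (rule face_perm_darts[OF rot sub])
  have step: "?g (?m d) = ?m (?f d)" if "d \<in> darts E" for d
  proof -
    obtain a b where d: "d = (a, b)" by (cases d)
    have "a \<in> V" "b \<in> V" using darts_sub[OF sub] that d by auto
    then show ?thesis unfolding d face_perm_def tr_rot_def by simp
  qed
  have pw: "(?g ^^ k) (?m d) = ?m ((?f ^^ k) d)" if "d \<in> darts E" for d k
  proof (induction k)
    case 0 show ?case by simp
  next
    case (Suc k)
    have "(?f ^^ k) d \<in> darts E" using funpow_in[OF cl that] .
    then show ?case using Suc step by simp
  qed
  have orbm: "orb ?g (?m d) = ?m ` orb ?f d" if "d \<in> darts E" for d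
  proof -
    have "orb ?g (?m d) = {?m ((?f ^^ k) d) | k. True}" unfolding orb_def by (simp add: pw[OF that])
    also have "\<dots> = ?m ` orb ?f d" unfolding orb_def by (rule compr_img)
    finally show ?thesis .
  qed
  have "faces ((`) \<psi> ` E) (tr_rot \<psi> V \<rho>) = (\<lambda>d. ?m ` orb ?f d) ` darts E"
    unfolding faces_orb darts_img image_image using orbm by (intro image_cong) auto
  also have "\<dots> = (`) ?m ` faces E \<rho>" unfolding faces_orb image_image by simp
  finally have F: "faces ((`) \<psi> ` E) (tr_rot \<psi> V \<rho>) = (`) ?m ` faces E \<rho>" .
  have "finite (faces E \<rho>)" unfolding faces_orb using finite_darts[OF fin sub] by simp
  then have "card (faces ((`) \<psi> ` E) (tr_rot \<psi> V \<rho>)) \<le> card (faces E \<rho>)"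
    unfolding F by (rule card_image_le)
  moreover have "((`) \<psi> ` E = {}) = (E = {})" by simp
  ultimately show ?thesis unfolding num_faces_def by auto
qed

lemma card_V: "card (\<psi> ` V) = card V"
  using inj by (rule card_image)

lemma card_E: "card ((`) \<psi> ` E) = card E"
proof (rule card_image)
  show "inj_on ((`) \<psi>) E"
    using inj_on_image_eq_iff[OF inj] sub unfolding inj_on_def by blast
qed

lemma conn_transport:
  assumes "graph_connected V E"
  shows "graph_connected (\<psi> ` V) ((`) \<psi> ` E)"
proof -
  have "(\<psi> u, \<psi> v) \<in> (darts ((`) \<psi> ` E))\<^sup>*" if "(u, v) \<in> (darts E)\<^sup>*" for u v
    using that
  proof (induction rule: rtrancl_induct)
    case base show ?case by simp
  next
    case (step y z)
    then have "(\<psi> y, \<psi> z) \<in> darts ((`) \<psi> ` E)" unfolding darts_img by force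
    with step(3) show ?case by (rule rtrancl_into_rtrancl)
  qed
  then show ?thesis using assms unfolding graph_connected_def by auto
qed

end

definition prv :: "nat \<Rightarrow> nat \<Rightarrow> nat" where
  "prv N x = (if x = 0 then N - 1 else x - 1)"
definition nxt :: "nat \<Rightarrow> nat \<Rightarrow> nat" where
  "nxt N x = (if x = N - 1 then 0 else x + 1)"
definition chd :: "nat \<Rightarrow> nat \<Rightarrow> nat" where
  "chd N x = (if even x then (if x + 3 < N then x + 3 else x + 3 - N)
              else (if 3 \<le> x then x - 3 else x + N - 3))"
definition ME :: "nat \<Rightarrow> nat set set" where
  "ME N = {{x, nxt N x} | x. x < N} \<union> {{x, chd N x} | x. x < N \<and> even x}"

definition rot3 :: "'a \<Rightarrow> 'a \<Rightarrow> 'a \<Rightarrow> 'a \<Rightarrow> 'a" where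
  "rot3 a b c y = (if y = a then b else if y = b then c else a)"

lemma rot3_rs:
  assumes "a \<noteq> b" "a \<noteq> c" "b \<noteq> c"
  shows "bij_betw (rot3 a b c) {a, b, c} {a, b, c} \<and>
    (\<forall>x\<in>{a, b, c}. \<forall>y\<in>{a, b, c}. \<exists>k. (rot3 a b c ^^ k) x = y)"
proof
  have r: "rot3 a b c a = b" "rot3 a b c b = c" "rot3 a b c c = a"
    using assms unfolding rot3_def by auto
  show "bij_betw (rot3 a b c) {a, b, c} {a, b, c}"
    unfolding bij_betw_def inj_on_def using r assms by auto
  have k1: "(rot3 a b c ^^ 1) x = rot3 a b c x" for x by simp
  have k2: "(rot3 a b c ^^ 2) x = rot3 a b c (rot3 a b c x)" for x by (simp add: numeral_2_eq_2)
  have "(rot3 a b c ^^ 0) x = x" for x by simp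
  then show "\<forall>x\<in>{a, b, c}. \<forall>y\<in>{a, b, c}. \<exists>k. (rot3 a b c ^^ k) x = y"
    using k1 k2 r by (metis insert_iff singletonD)
qed

lemma cyc2:
  assumes "g p = q" "g q = p" "x \<in> {p, q}" "y \<in> {p, q}"
  shows "\<exists>k. (g ^^ k) x = y"
proof (cases "x = y")
  case True then show ?thesis by (intro exI[of _ 0]) simp
next
  case False then have "g x = y" using assms by auto
  then show ?thesis by (intro exI[of _ 1]) simp
qed

lemma bij2:
  assumes "g p = q" "g q = p"
  shows "bij_betw g {p, q} {p, q}"
  unfolding bij_betw_def inj_on_def using assms by auto

lemma cyc3:
  assumes "g p = q" "g q = r" "g r = p" "x \<in> {p, q, r}" "y \<in> {p, q, r}"
  shows "\<exists>k. (g ^^ k) x = y"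
proof -
  have "x = y \<or> g x = y \<or> g (g x) = y" using assms by auto
  moreover have "(g ^^ 2) x = g (g x)" by (simp add: numeral_2_eq_2)
  moreover have "(g ^^ 1) x = g x" by simp
  moreover have "(g ^^ 0) x = x" by simp
  ultimately show ?thesis by metis
qed

lemma bij3:
  assumes "g p = q" "g q = r" "g r = p" "p \<noteq> q" "p \<noteq> r" "q \<noteq> r"
  shows "bij_betw g {p, q, r} {p, q, r}"
  unfolding bij_betw_def inj_on_def using assms by auto

lemma rot3_skip_rs:
  fixes a b c z :: 'a
  assumes "a \<noteq> b" "a \<noteq> c" "b \<noteq> c"
  defines "g \<equiv> \<lambda>y. if rot3 a b c y = z then rot3 a b c z else rot3 a b c y"
  shows "bij_betw g ({a, b, c} - {z}) ({a, b, c} - {z}) \<and>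
    (\<forall>x\<in>{a, b, c} - {z}. \<forall>y\<in>{a, b, c} - {z}. \<exists>k. (g ^^ k) x = y)"
proof -
  have r: "rot3 a b c a = b" "rot3 a b c b = c" "rot3 a b c c = a"
    using assms unfolding rot3_def by auto
  have k1: "(g ^^ 1) x = g x" for x by simp
  have k2: "(g ^^ 2) x = g (g x)" for x by (simp add: numeral_2_eq_2)
  have k0: "(g ^^ 0) x = x" for x by simp
  consider "z = a" | "z = b" | "z = c" | "z \<notin> {a, b, c}" by auto
  then show ?thesis
  proof cases
    case 1
    then have S: "{a, b, c} - {z} = {b, c}" using assms by auto
    have "g b = c" "g c = b" using r 1 assms unfolding g_def by auto
    then show ?thesis unfolding S using bij2 cyc2 by metis
  next
    case 2
    then have S: "{a, b, c} - {z} = {a, c}" using assms by auto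
    have "g a = c" "g c = a" using r 2 assms unfolding g_def by auto
    then show ?thesis unfolding S using bij2 cyc2 by metis
  next
    case 3
    then have S: "{a, b, c} - {z} = {a, b}" using assms by auto
    have "g a = b" "g b = a" using r 3 assms unfolding g_def by auto
    then show ?thesis unfolding S using bij2 cyc2 by metis
  next
    case 4
    then have S: "{a, b, c} - {z} = {a, b, c}" by auto
    have g: "g a = b" "g b = c" "g c = a" using r 4 assms unfolding g_def by auto
    then have "bij_betw g {a, b, c} {a, b, c}" using bij3 assms(1-3) by metis
    then show ?thesis unfolding S using cyc3[OF g] by blast
  qed
qed

locale mdl =
  fixes N :: nat
  assumes evN: "even N" and N6: "6 \<le> N"
begin

lemma lt: "x < N \<Longrightarrow> prv N x < N" "x < N \<Longrightarrow> nxt N x < N" "x < N \<Longrightarrow> chd N x < N"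
  using N6 unfolding prv_def nxt_def chd_def by auto

lemma inv: "x < N \<Longrightarrow> nxt N (prv N x) = x" "x < N \<Longrightarrow> prv N (nxt N x) = x"
  using N6 unfolding prv_def nxt_def by auto

lemma chd_chd: "x < N \<Longrightarrow> chd N (chd N x) = x"
  using N6 evN unfolding chd_def by (auto; presburger)

lemma chd_par: "x < N \<Longrightarrow> even (chd N x) \<longleftrightarrow> odd x"
  using N6 evN unfolding chd_def by (auto; presburger)

lemma dist: "x < N \<Longrightarrow> prv N x \<noteq> nxt N x" "x < N \<Longrightarrow> prv N x \<noteq> chd N x"
  "x < N \<Longrightarrow> nxt N x \<noteq> chd N x" "x < N \<Longrightarrow> prv N x \<noteq> x" "x < N \<Longrightarrow> nxt N x \<noteq> x"
  "x < N \<Longrightarrow> chd N x \<noteq> x"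
  using N6 evN unfolding prv_def nxt_def chd_def by (auto; presburger)+

end

definition rho0 :: "nat \<Rightarrow> nat \<Rightarrow> nat \<Rightarrow> nat" where
  "rho0 N x = (if x = 0 then rot3 (nxt N 0) (prv N 0) (chd N 0) else rot3 (prv N x) (nxt N x) (chd N x))"
definition rhoU :: "nat \<Rightarrow> nat \<Rightarrow> nat \<Rightarrow> nat" where
  "rhoU N x = rot3 (prv N x) (nxt N x) (chd N x)"
definition rhoD :: "nat \<Rightarrow> nat \<Rightarrow> nat \<Rightarrow> nat" where
  "rhoD N x y = (if rhoU N x y = 0 then rhoU N x 0 else rhoU N x y)"
definition MED :: "nat \<Rightarrow> nat set set" where
  "MED N = {e \<in> ME N. 0 \<notin> e}"

lemma nbr_del: "x \<noteq> z \<Longrightarrow> neighbors {e \<in> E. z \<notin> e} x = neighbors E x - {z}"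
  unfolding neighbors_def by auto

context mdl begin

lemma ME_sub: "\<forall>e\<in>ME N. e \<subseteq> {0..<N}"
proof
  fix e assume "e \<in> ME N"
  then consider x where "x < N" "e = {x, nxt N x}" | x where "x < N" "e = {x, chd N x}"
    unfolding ME_def by blast
  then show "e \<subseteq> {0..<N}" by cases (use lt in auto)
qed

lemma MED_sub: "\<forall>e\<in>MED N. e \<subseteq> {1..<N}"
proof
  fix e assume "e \<in> MED N"
  then have "e \<subseteq> {0..<N}" "0 \<notin> e" using ME_sub unfolding MED_def by auto
  then show "e \<subseteq> {1..<N}" by (auto simp: subset_iff) (metis Suc_leI gr0I)
qed

lemma nbr_ME:
  assumes "x < N"
  shows "neighbors (ME N) x = {prv N x, nxt N x, chd N x}"
proof
  show "neighbors (ME N) x \<subseteq> {prv N x, nxt N x, chd N x}"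
  proof
    fix u assume "u \<in> neighbors (ME N) x"
    then have u: "u \<noteq> x" "{u, x} \<in> ME N" unfolding neighbors_def by auto
    then consider (c) y where "y < N" "{u, x} = {y, nxt N y}"
      | (d) y where "y < N" "even y" "{u, x} = {y, chd N y}"
      unfolding ME_def by blast
    then show "u \<in> {prv N x, nxt N x, chd N x}"
    proof cases
      case c
      then have "(u = y \<and> x = nxt N y) \<or> (u = nxt N y \<and> x = y)" by (auto simp: doubleton_eq_iff)
      then show ?thesis using inv c(1) by auto
    next
      case d
      then have "(u = y \<and> x = chd N y) \<or> (u = chd N y \<and> x = y)" by (auto simp: doubleton_eq_iff)
      then show ?thesis using chd_chd d(1) by auto
    qed
  qed
next
  show "{prv N x, nxt N x, chd N x} \<subseteq> neighbors (ME N) x"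
  proof -
    have "{prv N x, x} \<in> ME N"
    proof -
      have "{prv N x, nxt N (prv N x)} \<in> ME N" using lt(1)[OF assms] unfolding ME_def by blast
      then show ?thesis using inv(1)[OF assms] by simp
    qed
    moreover have "{nxt N x, x} \<in> ME N" using assms unfolding ME_def by (auto simp: insert_commute)
    moreover have "{chd N x, x} \<in> ME N"
    proof (cases "even x")
      case True then show ?thesis using assms unfolding ME_def by (auto simp: insert_commute)
    next
      case False
      then have "even (chd N x)" using chd_par assms by simp
      then have "{chd N x, chd N (chd N x)} \<in> ME N" using lt(3)[OF assms] unfolding ME_def by blast
      then show ?thesis using chd_chd[OF assms] by simp
    qed
    ultimately show ?thesis using dist[OF assms] unfolding neighbors_def by auto
  qed
qed

lemma nbr_MED:
  assumes "x < N" "x \<noteq> 0"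
  shows "neighbors (MED N) x = {prv N x, nxt N x, chd N x} - {0}"
  unfolding MED_def using nbr_del[of x 0 "ME N"] nbr_ME[OF assms(1)] assms(2) by simp

lemma rs0: "is_rotation_system {0..<N} (ME N) (rho0 N)"
  unfolding is_rotation_system_def
proof (rule ballI)
  fix x assume "x \<in> {0..<N}"
  then have x: "x < N" by simp
  show "bij_betw (rho0 N x) (neighbors (ME N) x) (neighbors (ME N) x) \<and>
        (\<forall>a\<in>neighbors (ME N) x. \<forall>b\<in>neighbors (ME N) x. \<exists>k. (rho0 N x ^^ k) a = b)"
  proof (cases "x = 0")
    case True
    have "{prv N x, nxt N x, chd N x} = {nxt N x, prv N x, chd N x}" by auto
    then show ?thesis using rot3_rs[of "nxt N x" "prv N x" "chd N x"] dist[OF x] True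
      unfolding nbr_ME[OF x] rho0_def by auto
  next
    case False
    then show ?thesis using rot3_rs[of "prv N x" "nxt N x" "chd N x"] dist[OF x]
      unfolding nbr_ME[OF x] rho0_def by auto
  qed
qed

lemma rsD: "is_rotation_system {1..<N} (MED N) (rhoD N)"
  unfolding is_rotation_system_def
proof (rule ballI)
  fix x assume "x \<in> {1..<N}"
  then have x: "x < N" "x \<noteq> 0" by auto
  have e: "rhoD N x = (\<lambda>y. if rot3 (prv N x) (nxt N x) (chd N x) y = 0
       then rot3 (prv N x) (nxt N x) (chd N x) 0 else rot3 (prv N x) (nxt N x) (chd N x) y)"
    unfolding rhoD_def rhoU_def by (rule ext) simp
  show "bij_betw (rhoD N x) (neighbors (MED N) x) (neighbors (MED N) x) \<and>
        (\<forall>a\<in>neighbors (MED N) x. \<forall>b\<in>neighbors (MED N) x. \<exists>k. (rhoD N x ^^ k) a = b)"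
    unfolding nbr_MED[OF x] e using rot3_skip_rs[of "prv N x" "nxt N x" "chd N x" 0] dist[OF x(1)]
    by blast
qed

lemma conn: "graph_connected {1..<N} (MED N)"
proof -
  have st: "(a, Suc a) \<in> darts (MED N) \<and> (Suc a, a) \<in> darts (MED N)" if "1 \<le> a" "Suc a < N" for a
  proof -
    have "nxt N a = Suc a" using that unfolding nxt_def by auto
    then have "{a, Suc a} \<in> ME N" using that unfolding ME_def by force
    then have "{a, Suc a} \<in> MED N" using that unfolding MED_def by auto
    then show ?thesis unfolding darts_def by (auto simp: insert_commute)
  qed
  have up: "1 \<le> b \<longrightarrow> b < N \<longrightarrow> (1, b) \<in> (darts (MED N))\<^sup>* \<and> (b, 1) \<in> (darts (MED N))\<^sup>*" for b
  proof (induction b)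
    case 0 then show ?case by simp
  next
    case (Suc b)
    show ?case
    proof (intro impI)
      assume a: "1 \<le> Suc b" "Suc b < N"
      show "(1, Suc b) \<in> (darts (MED N))\<^sup>* \<and> (Suc b, 1) \<in> (darts (MED N))\<^sup>*"
      proof (cases "b = 0")
        case True then show ?thesis by simp
      next
        case False
        then have ih: "(1, b) \<in> (darts (MED N))\<^sup>*" "(b, 1) \<in> (darts (MED N))\<^sup>*" using Suc a by auto
        have s: "(b, Suc b) \<in> darts (MED N)" "(Suc b, b) \<in> darts (MED N)" using st[of b] a False by auto
        show ?thesis using rtrancl_into_rtrancl[OF ih(1) s(1)] converse_rtrancl_into_rtrancl[OF s(2) ih(2)]
          by simp
      qed
    qed
  qed
  show ?thesis unfolding graph_connected_def
  proof (intro conjI ballI)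
    show "{1..<N} \<noteq> {}" using N6 by simp
    fix u v assume "u \<in> {1..<N}" "v \<in> {1..<N}"
    then show "(u, v) \<in> (darts (MED N))\<^sup>*" using up by (meson atLeastLessThan_iff rtrancl_trans)
  qed
qed

end

lemma edges_at:
  assumes "\<forall>e\<in>E. \<exists>a b. a \<noteq> b \<and> e = {a, b}"
  shows "{e \<in> E. z \<in> e} = (\<lambda>u. {z, u}) ` neighbors E z"
proof
  show "{e \<in> E. z \<in> e} \<subseteq> (\<lambda>u. {z, u}) ` neighbors E z"
  proof
    fix e assume e: "e \<in> {e \<in> E. z \<in> e}"
    then obtain a b where ab: "a \<noteq> b" "e = {a, b}" using assms by blast
    then have "(z = a \<and> e = {z, b}) \<or> (z = b \<and> e = {z, a})" using e by auto
    then have "\<exists>u. u \<noteq> z \<and> e = {z, u}"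
    proof
      assume "z = a \<and> e = {z, b}" then show ?thesis using ab(1) by (intro exI[of _ b]) auto
    next
      assume "z = b \<and> e = {z, a}" then show ?thesis using ab(1) by (intro exI[of _ a]) auto
    qed
    then obtain u where "u \<noteq> z" "e = {z, u}" by blast
    then show "e \<in> (\<lambda>u. {z, u}) ` neighbors E z" using e unfolding neighbors_def
      by (auto simp: insert_commute)
  qed
next
  show "(\<lambda>u. {z, u}) ` neighbors E z \<subseteq> {e \<in> E. z \<in> e}"
    unfolding neighbors_def by (auto simp: insert_commute)
qed

lemma card_edges_at:
  assumes "\<forall>e\<in>E. \<exists>a b. a \<noteq> b \<and> e = {a, b}"
  shows "card {e \<in> E. z \<in> e} = card (neighbors E z)"
proof -
  have "inj_on (\<lambda>u. {z, u}) (neighbors E z)"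
    unfolding inj_on_def neighbors_def by (auto simp: doubleton_eq_iff)
  then show ?thesis unfolding edges_at[OF assms] by (rule card_image)
qed

lemma card_evens: "card {x::nat. x < N \<and> even x} = (N + 1) div 2"
proof -
  have "{x::nat. x < N \<and> even x} = (\<lambda>k. 2 * k) ` {0..<(N + 1) div 2}"
  proof
    show "{x. x < N \<and> even x} \<subseteq> (\<lambda>k. 2 * k) ` {0..<(N + 1) div 2}"
    proof
      fix x assume x: "x \<in> {x. x < N \<and> even x}"
      then have "x = 2 * (x div 2)" "x div 2 < (N + 1) div 2" by auto
      then show "x \<in> (\<lambda>k. 2 * k) ` {0..<(N + 1) div 2}" by (metis atLeastLessThan_iff image_eqI zero_le)
    qed
    show "(\<lambda>k. 2 * k) ` {0..<(N + 1) div 2} \<subseteq> {x. x < N \<and> even x}"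
      by auto
  qed
  moreover have "inj_on (\<lambda>k::nat. 2 * k) {0..<(N + 1) div 2}" unfolding inj_on_def by simp
  ultimately show ?thesis by (simp add: card_image)
qed

context mdl begin

lemma ME_form: "\<forall>e\<in>ME N. \<exists>a b. a \<noteq> b \<and> e = {a, b}"
proof
  fix e assume "e \<in> ME N"
  then consider x where "x < N" "e = {x, nxt N x}" | x where "x < N" "e = {x, chd N x}"
    unfolding ME_def by blast
  then show "\<exists>a b. a \<noteq> b \<and> e = {a, b}" by cases (use dist in metis)+
qed

lemma card_ME: "card (ME N) = N + N div 2"
proof -
  let ?A = "(\<lambda>x. {x, nxt N x}) ` {0..<N}"
  let ?B = "(\<lambda>x. {x, chd N x}) ` {x. x < N \<and> even x}"
  have ME: "ME N = ?A \<union> ?B" unfolding ME_def by auto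
  have iA: "inj_on (\<lambda>x. {x, nxt N x}) {0..<N}"
  proof (rule inj_onI)
    fix x y assume xy: "x \<in> {0..<N}" "y \<in> {0..<N}" "{x, nxt N x} = {y, nxt N y}"
    show "x = y"
    proof (rule ccontr)
      assume "x \<noteq> y"
      then have "x = nxt N y" "nxt N x = y" using xy(3) by (auto simp: doubleton_eq_iff)
      then have "prv N x = y" using inv xy by auto
      then show False using dist(1)[of x] xy \<open>nxt N x = y\<close> by auto
    qed
  qed
  have iB: "inj_on (\<lambda>x. {x, chd N x}) {x. x < N \<and> even x}"
  proof (rule inj_onI)
    fix x y assume xy: "x \<in> {x. x < N \<and> even x}" "y \<in> {x. x < N \<and> even x}" "{x, chd N x} = {y, chd N y}"
    show "x = y"
    proof (rule ccontr)
      assume "x \<noteq> y"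
      then have "x = chd N y" using xy(3) by (auto simp: doubleton_eq_iff)
      then show False using chd_par[of y] xy by auto
    qed
  qed
  have disj: "?A \<inter> ?B = {}"
  proof (rule ccontr)
    assume "?A \<inter> ?B \<noteq> {}"
    then obtain x y where xy: "x < N" "y < N" "even y" "{x, nxt N x} = {y, chd N y}" by auto
    then have "(x = y \<and> nxt N x = chd N y) \<or> (x = chd N y \<and> nxt N x = y)" by (auto simp: doubleton_eq_iff)
    then show False
    proof
      assume "x = y \<and> nxt N x = chd N y" then show False using dist(3)[of x] xy by auto
    next
      assume h: "x = chd N y \<and> nxt N x = y"
      have "prv N y = prv N (nxt N x)" using h by metis
      also have "\<dots> = x" using inv(2)[OF xy(1)] .
      finally have "prv N y = x" .
      then show False using dist(2)[of y] xy h by auto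
    qed
  qed
  have "card (ME N) = card ?A + card ?B" unfolding ME by (rule card_Un_disjoint) (use disj in auto)
  also have "card ?A = N" using card_image[OF iA] by simp
  also have "card ?B = N div 2" using card_image[OF iB] card_evens[of N] evN by simp
  finally show ?thesis .
qed

lemma card_MED: "card (MED N) = N + N div 2 - 3"
proof -
  have "card {e \<in> ME N. 0 \<in> e} = 3"
    using card_edges_at[OF ME_form, of 0] nbr_ME[of 0] N6 dist[of 0] by simp
  moreover have "MED N = ME N - {e \<in> ME N. 0 \<in> e}" unfolding MED_def by auto
  moreover have "finite (ME N)"
    using ME_sub by (meson finite_Pow_iff finite_atLeastLessThan finite_subset subsetI PowI)
  ultimately show ?thesis using card_ME by (simp add: card_Diff_subset)
qed

lemma darts_ne: "darts (ME N) \<noteq> {}" "darts (MED N) \<noteq> {}"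
proof -
  have "nxt N 1 = 2" using N6 unfolding nxt_def by simp
  then have "2 \<in> neighbors (MED N) 1" using nbr_MED[of 1] N6 by simp
  then have "(1, 2) \<in> darts (MED N)" unfolding darts_iff .
  moreover have "darts (MED N) \<subseteq> darts (ME N)" unfolding MED_def darts_def by auto
  ultimately show "darts (ME N) \<noteq> {}" "darts (MED N) \<noteq> {}" by auto
qed

end

context mdl begin

lemma rD_p: "x < N \<Longrightarrow> x \<noteq> 0 \<Longrightarrow> rhoD N x (prv N x) = (if nxt N x = 0 then chd N x else nxt N x)"
  using dist[of x] unfolding rhoD_def rhoU_def rot3_def by auto
lemma rD_n: "x < N \<Longrightarrow> x \<noteq> 0 \<Longrightarrow> rhoD N x (nxt N x) = (if chd N x = 0 then prv N x else chd N x)"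
  using dist[of x] unfolding rhoD_def rhoU_def rot3_def by auto
lemma rD_c: "x < N \<Longrightarrow> x \<noteq> 0 \<Longrightarrow> rhoD N x (chd N x) = (if prv N x = 0 then nxt N x else prv N x)"
  using dist[of x] unfolding rhoD_def rhoU_def rot3_def by auto

lemma r0_p: "x < N \<Longrightarrow> x \<noteq> 0 \<Longrightarrow> rho0 N x (prv N x) = nxt N x"
  using dist[of x] unfolding rho0_def rot3_def by auto
lemma r0_n: "x < N \<Longrightarrow> x \<noteq> 0 \<Longrightarrow> rho0 N x (nxt N x) = chd N x"
  using dist[of x] unfolding rho0_def rot3_def by auto
lemma r0_c: "x < N \<Longrightarrow> x \<noteq> 0 \<Longrightarrow> rho0 N x (chd N x) = prv N x"
  using dist[of x] unfolding rho0_def rot3_def by auto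
lemma r00: "rho0 N 0 (nxt N 0) = prv N 0" "rho0 N 0 (prv N 0) = chd N 0" "rho0 N 0 (chd N 0) = nxt N 0"
  using dist[of 0] N6 unfolding rho0_def rot3_def by auto

lemma fp: "face_perm \<rho> (a, b) = (b, \<rho> b a)"
  unfolding face_perm_def by simp

lemma vals:
  "0 < x \<Longrightarrow> prv N x = x - 1" "prv N 0 = N - 1"
  "x + 1 < N \<Longrightarrow> nxt N x = x + 1" "nxt N (N - 1) = 0"
  "even x \<Longrightarrow> x + 3 < N \<Longrightarrow> chd N x = x + 3" "chd N (N - 2) = 1"
  "odd x \<Longrightarrow> 3 \<le> x \<Longrightarrow> chd N x = x - 3" "chd N 1 = N - 2"
  using N6 evN unfolding prv_def nxt_def chd_def by auto

abbreviation "fD \<equiv> face_perm (rhoD N)"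
abbreviation "f0 \<equiv> face_perm (rho0 N)"

lemma D_A: assumes "1 \<le> a" "a + 2 < N" shows "fD (a, a + 1) = (a + 1, a + 2)"
proof -
  have "prv N (a + 1) = a" "nxt N (a + 1) = a + 2" using vals assms by auto
  then show ?thesis using rD_p[of "a + 1"] assms unfolding fp by simp
qed

lemma D_A2: "fD (N - 2, N - 1) = (N - 1, N - 4)"
proof -
  have "prv N (N - 1) = N - 2" "nxt N (N - 1) = 0" "chd N (N - 1) = N - 4"
    using vals(1,4) vals(7)[of "N - 1"] N6 evN by auto
  then show ?thesis using rD_p[of "N - 1"] N6 unfolding fp by simp
qed

lemma D_A3: "fD (N - 1, N - 4) = (N - 4, N - 5)"
proof -
  have "prv N (N - 4) = N - 5" "chd N (N - 4) = N - 1"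
    using vals(1) vals(5)[of "N - 4"] N6 evN by auto
  then show ?thesis using rD_c[of "N - 4"] N6 unfolding fp by simp
qed

lemma D_P1: assumes "even e" "6 \<le> e" "e + 2 \<le> N" shows "fD (e, e - 1) = (e - 1, e - 4)"
proof -
  have "nxt N (e - 1) = e" "chd N (e - 1) = e - 4"
    using vals(3)[of "e - 1"] vals(7)[of "e - 1"] assms by auto
  then show ?thesis using rD_n[of "e - 1"] assms unfolding fp by simp
qed

lemma D_P2: assumes "even e" "6 \<le> e" "e + 2 \<le> N" shows "fD (e - 1, e - 4) = (e - 4, e - 5)"
proof -
  have "prv N (e - 4) = e - 5" "chd N (e - 4) = e - 1"
    using vals(1)[of "e - 4"] vals(5)[of "e - 4"] assms by auto
  then show ?thesis using rD_c[of "e - 4"] assms unfolding fp by simp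
qed

lemma D_P4a: "fD (4, 3) = (3, 2)"
proof -
  have "nxt N 3 = 4" "chd N 3 = 0" "prv N 3 = 2" using vals(1,3) vals(7)[of 3] N6 by auto
  then show ?thesis using rD_n[of 3] N6 unfolding fp by simp
qed

lemma D_P4b: "fD (3, 2) = (2, 5)"
proof -
  have "nxt N 2 = 3" "chd N 2 = 5" using vals(3) vals(5)[of 2] N6 by auto
  then show ?thesis using rD_n[of 2] N6 unfolding fp by simp
qed

lemma D_P2a: "fD (2, 1) = (1, N - 2)"
proof -
  have "nxt N 1 = 2" "chd N 1 = N - 2" using vals(3,8) N6 by auto
  then show ?thesis using rD_n[of 1] N6 unfolding fp by simp
qed

lemma D_P2b: "fD (1, N - 2) = (N - 2, N - 3)"
proof -
  have "chd N (N - 2) = 1" "prv N (N - 2) = N - 3" using vals(1,6) N6 by auto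
  then show ?thesis using rD_c[of "N - 2"] N6 unfolding fp by simp
qed

lemma D_Q1: assumes "even e" "2 \<le> e" "e + 4 \<le> N" shows "fD (e, e + 3) = (e + 3, e + 2)"
proof -
  have "chd N (e + 3) = e" "prv N (e + 3) = e + 2" using vals(1) vals(7)[of "e + 3"] assms by auto
  then show ?thesis using rD_c[of "e + 3"] assms unfolding fp by simp
qed

lemma D_Q2: assumes "even e" "2 \<le> e" "e + 6 \<le> N" shows "fD (e + 3, e + 2) = (e + 2, e + 5)"
proof -
  have "nxt N (e + 2) = e + 3" "chd N (e + 2) = e + 5" using vals(3) vals(5)[of "e + 2"] assms by auto
  then show ?thesis using rD_n[of "e + 2"] assms unfolding fp by simp
qed

lemma D_Q3: "fD (N - 1, N - 2) = (N - 2, 1)"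
proof -
  have "nxt N (N - 2) = N - 1" "chd N (N - 2) = 1" using vals(3,6) N6 by auto
  then show ?thesis using rD_n[of "N - 2"] N6 unfolding fp by simp
qed

lemma D_QE: "fD (N - 2, 1) = (1, 2)"
proof -
  have "chd N 1 = N - 2" "prv N 1 = 0" "nxt N 1 = 2" using vals(1,3,8) N6 by auto
  then show ?thesis using rD_c[of 1] N6 unfolding fp by simp
qed

lemma Z_A: assumes "a + 2 < N" shows "f0 (a, a + 1) = (a + 1, a + 2)"
proof -
  have "prv N (a + 1) = a" "nxt N (a + 1) = a + 2" using vals assms by auto
  then show ?thesis using r0_p[of "a + 1"] assms unfolding fp by simp
qed

lemma Z_A2: "f0 (N - 2, N - 1) = (N - 1, 0)"
proof -
  have "prv N (N - 1) = N - 2" "nxt N (N - 1) = 0" using vals(1,4) N6 by auto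
  then show ?thesis using r0_p[of "N - 1"] N6 unfolding fp by simp
qed

lemma Z_A3: "f0 (N - 1, 0) = (0, 3)"
proof -
  have "prv N 0 = N - 1" "chd N 0 = 3" using vals(2) vals(5)[of 0] N6 by auto
  then show ?thesis using r00(2) unfolding fp by simp
qed

lemma Z_Q1: assumes "even e" "e + 4 \<le> N" shows "f0 (e, e + 3) = (e + 3, e + 2)"
proof -
  have "chd N (e + 3) = e" "prv N (e + 3) = e + 2" using vals(1) vals(7)[of "e + 3"] assms by auto
  then show ?thesis using r0_c[of "e + 3"] assms unfolding fp by simp
qed

lemma Z_Q2: assumes "even e" "e + 6 \<le> N" shows "f0 (e + 3, e + 2) = (e + 2, e + 5)"
proof -
  have "nxt N (e + 2) = e + 3" "chd N (e + 2) = e + 5" using vals(3) vals(5)[of "e + 2"] assms by auto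
  then show ?thesis using r0_n[of "e + 2"] assms unfolding fp by simp
qed

lemma Z_Q3: "f0 (N - 1, N - 2) = (N - 2, 1)"
proof -
  have "nxt N (N - 2) = N - 1" "chd N (N - 2) = 1" using vals(3,6) N6 by auto
  then show ?thesis using r0_n[of "N - 2"] N6 unfolding fp by simp
qed

lemma Z_Q4: "f0 (N - 2, 1) = (1, 0)"
proof -
  have "chd N 1 = N - 2" "prv N 1 = 0" using vals(1,8) N6 by auto
  then show ?thesis using r0_c[of 1] N6 unfolding fp by simp
qed

lemma Z_Q5: "f0 (1, 0) = (0, N - 1)"
proof -
  have "nxt N 0 = 1" "prv N 0 = N - 1" using vals(2,3) N6 by auto
  then show ?thesis using r00(1) unfolding fp by simp
qed

lemma Z_Q6: "f0 (0, N - 1) = (N - 1, N - 4)"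
proof -
  have "nxt N (N - 1) = 0" "chd N (N - 1) = N - 4" using vals(4) vals(7)[of "N - 1"] N6 evN by auto
  then show ?thesis using r0_n[of "N - 1"] N6 unfolding fp by simp
qed

lemma Z_Q7: "f0 (N - 1, N - 4) = (N - 4, N - 5)"
proof -
  have "prv N (N - 4) = N - 5" "chd N (N - 4) = N - 1"
    using vals(1) vals(5)[of "N - 4"] N6 evN by auto
  then show ?thesis using r0_c[of "N - 4"] N6 unfolding fp by simp
qed

lemma Z_P1: assumes "even e" "6 \<le> e" "e + 2 \<le> N" shows "f0 (e, e - 1) = (e - 1, e - 4)"
proof -
  have "nxt N (e - 1) = e" "chd N (e - 1) = e - 4"
    using vals(3)[of "e - 1"] vals(7)[of "e - 1"] assms by auto
  then show ?thesis using r0_n[of "e - 1"] assms unfolding fp by simp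
qed

lemma Z_P2: assumes "even e" "6 \<le> e" "e + 2 \<le> N" shows "f0 (e - 1, e - 4) = (e - 4, e - 5)"
proof -
  have "prv N (e - 4) = e - 5" "chd N (e - 4) = e - 1"
    using vals(1)[of "e - 4"] vals(5)[of "e - 4"] assms by auto
  then show ?thesis using r0_c[of "e - 4"] assms unfolding fp by simp
qed

lemma Z_P4a: "f0 (4, 3) = (3, 0)"
proof -
  have "nxt N 3 = 4" "chd N 3 = 0" using vals(3) vals(7)[of 3] N6 by auto
  then show ?thesis using r0_n[of 3] N6 unfolding fp by simp
qed

lemma Z_P4b: "f0 (3, 0) = (0, 1)"
proof -
  have "chd N 0 = 3" "nxt N 0 = 1" using vals(3) vals(5)[of 0] N6 by auto
  then show ?thesis using r00(3) unfolding fp by simp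
qed

lemma Z_P2a: "f0 (2, 1) = (1, N - 2)"
proof -
  have "nxt N 1 = 2" "chd N 1 = N - 2" using vals(3,8) N6 by auto
  then show ?thesis using r0_n[of 1] N6 unfolding fp by simp
qed

lemma Z_P2b: "f0 (1, N - 2) = (N - 2, N - 3)"
proof -
  have "chd N (N - 2) = 1" "prv N (N - 2) = N - 3" using vals(1,6) N6 by auto
  then show ?thesis using r0_c[of "N - 2"] N6 unfolding fp by simp
qed

end

definition cl :: "('b \<Rightarrow> 'b) \<Rightarrow> 'b set \<Rightarrow> bool" where
  "cl f T \<longleftrightarrow> (\<forall>x\<in>T. f x \<in> T)"

lemma cl_orb: "cl f (orb f d)"
  unfolding cl_def by (intro ballI orb_step)

lemma cl_Un: "cl f A \<Longrightarrow> cl f B \<Longrightarrow> cl f (A \<union> B)"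
  unfolding cl_def by blast

lemma clD: "cl f T \<Longrightarrow> x \<in> T \<Longrightarrow> f x = y \<Longrightarrow> y \<in> T"
  unfolding cl_def by auto

lemma m42: "(N::nat) mod 4 = 2 \<Longrightarrow> 6 \<le> N \<Longrightarrow> (N - 4 - 2) mod 4 = 0"
proof -
  assume a: "N mod 4 = 2" "6 \<le> N"
  define q where "q = N div 4"
  have N: "N = 4 * q + 2" using a(1) unfolding q_def by (metis div_mult_mod_eq add.commute mult.commute)
  then have "N - 4 - 2 = 4 * (q - 1)" using a(2) by (simp add: right_diff_distrib')
  then show ?thesis by simp
qed

lemma ev_sub: "even (a::nat) \<Longrightarrow> even b \<Longrightarrow> even (a - b)"
  by (metis dvd_diff_nat)
lemma mod4a: "even (d::nat) \<Longrightarrow> d mod 4 \<noteq> 0 \<Longrightarrow> d mod 4 = 2"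
  by presburger
lemma mod4b: "(d::nat) mod 4 = 2 \<Longrightarrow> 2 \<le> d \<and> (d - 2) mod 4 = 0"
  by presburger

context mdl begin

lemma D_Achain:
  assumes "cl fD T" "(1, 2) \<in> T"
  shows "1 \<le> a \<longrightarrow> a + 2 \<le> N \<longrightarrow> (a, a + 1) \<in> T"
proof (induction a)
  case 0 then show ?case by simp
next
  case (Suc a)
  show ?case
  proof (intro impI)
    assume a: "1 \<le> Suc a" "Suc a + 2 \<le> N"
    show "(Suc a, Suc a + 1) \<in> T"
    proof (cases "a = 0")
      case True then show ?thesis using assms(2) by (simp add: numeral_2_eq_2)
    next
      case False
      then have m: "(a, a + 1) \<in> T" using Suc a by simp
      have e: "fD (a, a + 1) = (Suc a, Suc a + 1)" using D_A[of a] False a by simp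
      show ?thesis using clD[OF assms(1) m e] .
    qed
  qed
qed

lemma D_Pchain:
  assumes "cl fD T" "even e" "2 \<le> e" "e + 2 \<le> N" "(e, e - 1) \<in> T"
  shows "4 * k + 2 \<le> e \<longrightarrow> (e - 4 * k, e - 4 * k - 1) \<in> T \<and> (6 \<le> e - 4 * k \<longrightarrow> (e - 4 * k - 1, e - 4 * k - 4) \<in> T)"
proof (induction k)
  case 0
  show ?case
  proof (intro impI conjI)
    show "(e - 4 * 0, e - 4 * 0 - 1) \<in> T" using assms(5) by simp
    assume "6 \<le> e - 4 * 0"
    then show "(e - 4 * 0 - 1, e - 4 * 0 - 4) \<in> T" using clD[OF assms(1,5) D_P1] assms by simp
  qed
next
  case (Suc k)
  show ?case
  proof (intro impI)
    assume h: "4 * Suc k + 2 \<le> e"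
    let ?e = "e - 4 * k"
    have ev: "even ?e" "6 \<le> ?e" "?e + 2 \<le> N" using h assms by auto
    have "(?e, ?e - 1) \<in> T" "(?e - 1, ?e - 4) \<in> T" using Suc h by auto
    then have c: "(?e - 4, ?e - 5) \<in> T" using clD[OF assms(1) _ D_P2[OF ev]] by blast
    have eq: "e - 4 * Suc k = ?e - 4" "e - 4 * Suc k - 1 = ?e - 5" "e - 4 * Suc k - 4 = ?e - 8" using h by auto
    show "(e - 4 * Suc k, e - 4 * Suc k - 1) \<in> T \<and>
      (6 \<le> e - 4 * Suc k \<longrightarrow> (e - 4 * Suc k - 1, e - 4 * Suc k - 4) \<in> T)"
    proof (intro conjI impI)
      show "(e - 4 * Suc k, e - 4 * Suc k - 1) \<in> T" using c eq by simp
      assume h6: "6 \<le> e - 4 * Suc k"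
      have h6': "6 \<le> ?e - 4" using h6 eq(1) by simp
      have ev2: "even (?e - 4)" "6 \<le> ?e - 4" "?e - 4 + 2 \<le> N"
        using h6' ev(1) apply presburger using h6' apply simp using ev(3) by linarith
      have "fD (?e - 4, ?e - 4 - 1) = (?e - 4 - 1, ?e - 4 - 4)" by (rule D_P1[OF ev2])
      moreover have "?e - 4 - 1 = ?e - 5" "?e - 4 - 4 = ?e - 8" by auto
      ultimately have "fD (?e - 4, ?e - 5) = (?e - 5, ?e - 8)" by simp
      then have "(?e - 5, ?e - 8) \<in> T" using clD[OF assms(1) c] by blast
      then show "(e - 4 * Suc k - 1, e - 4 * Suc k - 4) \<in> T" using eq by simp
    qed
  qed
qed

lemma D_Pclos:
  assumes "cl fD T" "even e" "2 \<le> e" "e + 2 \<le> N" "(e, e - 1) \<in> T"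
    and "even e'" "2 \<le> e'" "e' \<le> e" "(e - e') mod 4 = 0"
  shows "(e', e' - 1) \<in> T \<and> (6 \<le> e' \<longrightarrow> (e' - 1, e' - 4) \<in> T)"
proof -
  define k where "k = (e - e') div 4"
  have "e' = e - 4 * k" "4 * k + 2 \<le> e" using assms(7-9) unfolding k_def by presburger+
  then show ?thesis using D_Pchain[OF assms(1-5), of k] by simp
qed

lemma D_Qchain:
  assumes "cl fD T" "(2, 5) \<in> T"
  shows "2 * k + 6 \<le> N \<longrightarrow> (2 + 2 * k, 2 + 2 * k + 3) \<in> T \<and> (2 + 2 * k + 3, 2 + 2 * k + 2) \<in> T"
proof (induction k)
  case 0
  have "fD (2, 2 + 3) = (2 + 3, 2 + 2)" using D_Q1[of 2] N6 by simp
  then show ?case using assms clD[OF assms(1)] by simp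
next
  case (Suc k)
  show ?case
  proof (intro impI)
    assume h: "2 * Suc k + 6 \<le> N"
    let ?e = "2 + 2 * k"
    have "(?e + 3, ?e + 2) \<in> T" using Suc h by simp
    moreover have "fD (?e + 3, ?e + 2) = (?e + 2, ?e + 5)" using D_Q2[of ?e] h by simp
    ultimately have a: "(?e + 2, ?e + 5) \<in> T" using clD[OF assms(1)] by blast
    have "fD (?e + 2, ?e + 2 + 3) = (?e + 2 + 3, ?e + 2 + 2)" using D_Q1[of "?e + 2"] h by simp
    then have b: "(?e + 2 + 3, ?e + 2 + 2) \<in> T" using clD[OF assms(1)] a by (simp add: add.assoc)
    have eq: "2 + 2 * Suc k = ?e + 2" by simp
    show "(2 + 2 * Suc k, 2 + 2 * Suc k + 3) \<in> T \<and> (2 + 2 * Suc k + 3, 2 + 2 * Suc k + 2) \<in> T"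
      unfolding eq using a b by (simp add: add.assoc)
  qed
qed

lemma D_cover:
  assumes T: "cl fD T" and s1: "(1, 2) \<in> T" and s2o: "(1, N - 2) \<in> T \<or> N mod 4 = 2"
  shows "darts (MED N) \<subseteq> T"
proof -
  have A: "(a, a + 1) \<in> T" if "1 \<le> a" "a + 2 \<le> N" for a using D_Achain[OF T s1] that by blast
  have "(N - 2, N - 1) \<in> T" using A[of "N - 2"] N6 by (simp add: Suc_diff_Suc numeral_2_eq_2)
  then have A2: "(N - 1, N - 4) \<in> T" using clD[OF T _ D_A2] by blast
  then have A3: "(N - 4, N - 5) \<in> T" using clD[OF T _ D_A3] by blast
  have s2: "(1, N - 2) \<in> T"
  proof (cases "(1, N - 2) \<in> T")
    case False
    then have m: "N mod 4 = 2" using s2o by blast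
    have ev: "even (N - 4)" using ev_sub[OF evN, of 4] by simp
    have l4: "2 \<le> N - 4" "N - 4 + 2 \<le> N" using N6 by linarith+
    have "N - 4 - 1 = N - 5" by linarith
    then have m4: "(N - 4, N - 4 - 1) \<in> T" using A3 by simp
    have "(2, 2 - 1) \<in> T \<and> (6 \<le> (2::nat) \<longrightarrow> (2 - 1, 2 - 4) \<in> T)"
      by (rule D_Pclos[OF T ev l4 m4 _ _ l4(1) m42[OF m N6]]) simp_all
    then have "(2, 1) \<in> T" by simp
    then show ?thesis using clD[OF T _ D_P2a] by blast
  qed
  have B: "(N - 2, N - 3) \<in> T" using clD[OF T s2 D_P2b] .
  have P: "(e, e - 1) \<in> T \<and> (6 \<le> e \<longrightarrow> (e - 1, e - 4) \<in> T)" if "even e" "2 \<le> e" "e + 2 \<le> N" for e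
  proof -
    have ev: "even (N - 4)" "even (N - 2)" using ev_sub[OF evN, of 4] ev_sub[OF evN, of 2] by simp_all
    have l4: "2 \<le> N - 4" "N - 4 + 2 \<le> N" "2 \<le> N - 2" "N - 2 + 2 \<le> N" using N6 by linarith+
    have "N - 4 - 1 = N - 5" "N - 2 - 1 = N - 3" by linarith+
    then have m4: "(N - 4, N - 4 - 1) \<in> T" and m2: "(N - 2, N - 2 - 1) \<in> T" using A3 B by simp_all
    show ?thesis
    proof (cases "(N - 2 - e) mod 4 = 0")
      case True
      have "e \<le> N - 2" using that(3) by simp
      then show ?thesis by (rule D_Pclos[OF T ev(2) l4(3,4) m2 that(1,2) _ True])
    next
      case False
      have "even (N - 2 - e)" using ev_sub[OF ev(2) that(1)] .
      then have "(N - 2 - e) mod 4 = 2" using False by (rule mod4a)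
      then have c: "2 \<le> N - 2 - e \<and> (N - 2 - e - 2) mod 4 = 0" by (rule mod4b)
      have eq: "N - 2 - e - 2 = N - 4 - e" by arith
      have h1: "e \<le> N - 4" using c by arith
      have h2: "(N - 4 - e) mod 4 = 0" using c unfolding eq by blast
      have h: "e \<le> N - 4 \<and> (N - 4 - e) mod 4 = 0" using h1 h2 by blast
      show ?thesis by (rule D_Pclos[OF T ev(1) l4(1,2) m4 that(1,2) h1 h2])
    qed
  qed
  have "(4, 3) \<in> T" using P[of 4] N6 by simp
  then have P4a: "(3, 2) \<in> T" using clD[OF T _ D_P4a] by blast
  then have P4b: "(2, 5) \<in> T" using clD[OF T _ D_P4b] by blast
  have Q: "(e, e + 3) \<in> T \<and> (e + 3, e + 2) \<in> T" if q: "even e" "2 \<le> e" "e + 4 \<le> N" for e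
  proof -
    obtain j where j: "e = 2 * j" using q(1) unfolding dvd_def by blast
    then have k: "e = 2 + 2 * (j - 1)" using q(2) by simp
    show ?thesis using D_Qchain[OF T P4b, of "j - 1"] k q by simp
  qed
  have "(N - 4, N - 4 + 3) \<in> T \<and> (N - 4 + 3, N - 4 + 2) \<in> T" using Q[of "N - 4"] N6 evN by simp
  moreover have "N - 4 + 3 = N - 1" "N - 4 + 2 = N - 2" using N6 by arith+
  ultimately have "(N - 1, N - 2) \<in> T" by simp
  then have Q3: "(N - 2, 1) \<in> T" using clD[OF T _ D_Q3] by blast
  show ?thesis
  proof
    fix d assume d: "d \<in> darts (MED N)"
    obtain a b where ab: "d = (a, b)" by (cases d)
    have "a \<in> {1..<N}" using darts_sub[OF MED_sub] d ab by auto
    then have a: "a < N" "a \<noteq> 0" by auto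
    have "b \<in> neighbors (MED N) a" using d ab by (simp add: darts_iff)
    then have b: "b \<in> {prv N a, nxt N a, chd N a}" "b \<noteq> 0" using nbr_MED[OF a] by auto
    show "d \<in> T"
    proof -
      consider "b = nxt N a" | "b = prv N a" | "b = chd N a" using b by auto
      then show ?thesis
      proof cases
        case 1
        then have "a \<noteq> N - 1" using b(2) unfolding nxt_def by auto
        then have "b = a + 1" "a + 2 \<le> N" using 1 a unfolding nxt_def by auto
        then show ?thesis using A[of a] a ab by simp
      next
        case 2
        then have b1: "b = a - 1" using a unfolding prv_def by auto
        show ?thesis
        proof (cases "even a")
          case True
          then have "a + 2 \<le> N" "2 \<le> a" using a evN by presburger+
          then show ?thesis using P[of a] True ab b1 by simp
        next
          case False
          then have "a = 1 \<or> a = 3 \<or> (5 \<le> a \<and> a + 1 \<le> N)" using a evN by presburger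
          then show ?thesis
          proof (elim disjE)
            assume "a = 1" then show ?thesis using b b1 by simp
          next
            assume "a = 3" then show ?thesis using P4a b1 ab by simp
          next
            assume h: "5 \<le> a \<and> a + 1 \<le> N"
            then have "even (a - 3)" "2 \<le> a - 3" "a - 3 + 4 \<le> N" using False by auto
            then have "(a - 3 + 3, a - 3 + 2) \<in> T" using Q[of "a - 3"] by blast
            moreover have "a - 3 + 3 = a" "a - 3 + 2 = a - 1" using h by auto
            ultimately show ?thesis using ab b1 by simp
          qed
        qed
      next
        case 3
        show ?thesis
        proof (cases "even a")
          case True
          then have "a + 4 \<le> N \<or> a + 2 = N" using a evN by presburger
          then have "a + 4 \<le> N \<or> a = N - 2" by auto
          then show ?thesis
          proof
            assume h: "a + 4 \<le> N"
            then have "b = a + 3" using 3 True unfolding chd_def by auto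
            moreover have "2 \<le> a" using True a by presburger
            ultimately show ?thesis using Q[of a] True h ab by simp
          next
            assume "a = N - 2" then show ?thesis using 3 vals(6) Q3 ab by simp
          qed
        next
          case False
          then have "a = 1 \<or> a = 3 \<or> a + 1 = N \<or> (5 \<le> a \<and> a + 3 \<le> N)" using a evN by presburger
          then have "a = 1 \<or> a = 3 \<or> a = N - 1 \<or> (5 \<le> a \<and> a + 3 \<le> N)" by auto
          then show ?thesis
          proof (elim disjE)
            assume "a = 1" then show ?thesis using 3 vals(8) s2 ab by simp
          next
            assume "a = 3" then show ?thesis using 3 b(2) vals(7)[of 3] by simp
          next
            assume "a = N - 1" then show ?thesis using 3 vals(7)[of "N - 1"] N6 evN A2 ab by simp
          next
            assume h: "5 \<le> a \<and> a + 3 \<le> N"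
            then have "b = a - 3" using 3 False vals(7) by simp
            moreover have "even (a + 1)" "2 \<le> a + 1" "a + 1 + 2 \<le> N" "6 \<le> a + 1" using False h by auto
            ultimately show ?thesis using P[of "a + 1"] ab by simp
          qed
        qed
      qed
    qed
  qed
qed

end

context mdl begin

lemma Z_Achain:
  assumes "cl f0 T" "(0, 1) \<in> T"
  shows "a + 2 \<le> N \<longrightarrow> (a, a + 1) \<in> T"
proof (induction a)
  case 0 then show ?case using assms(2) by simp
next
  case (Suc a)
  show ?case
  proof (intro impI)
    assume a: "Suc a + 2 \<le> N"
    then have m: "(a, a + 1) \<in> T" using Suc by simp
    have e: "f0 (a, a + 1) = (Suc a, Suc a + 1)" using Z_A[of a] a by simp
    show "(Suc a, Suc a + 1) \<in> T" using clD[OF assms(1) m e] .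
  qed
qed

lemma Z_Pchain:
  assumes "cl f0 T" "even e" "2 \<le> e" "e + 2 \<le> N" "(e, e - 1) \<in> T"
  shows "4 * k + 2 \<le> e \<longrightarrow> (e - 4 * k, e - 4 * k - 1) \<in> T \<and> (6 \<le> e - 4 * k \<longrightarrow> (e - 4 * k - 1, e - 4 * k - 4) \<in> T)"
proof (induction k)
  case 0
  show ?case
  proof (intro impI conjI)
    show "(e - 4 * 0, e - 4 * 0 - 1) \<in> T" using assms(5) by simp
    assume "6 \<le> e - 4 * 0"
    then show "(e - 4 * 0 - 1, e - 4 * 0 - 4) \<in> T" using clD[OF assms(1,5) Z_P1] assms by simp
  qed
next
  case (Suc k)
  show ?case
  proof (intro impI)
    assume h: "4 * Suc k + 2 \<le> e"
    let ?e = "e - 4 * k"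
    have ev: "even ?e" "6 \<le> ?e" "?e + 2 \<le> N" using h assms by auto
    have "(?e, ?e - 1) \<in> T" "(?e - 1, ?e - 4) \<in> T" using Suc h by auto
    then have c: "(?e - 4, ?e - 5) \<in> T" using clD[OF assms(1) _ Z_P2[OF ev]] by blast
    have eq: "e - 4 * Suc k = ?e - 4" "e - 4 * Suc k - 1 = ?e - 5" "e - 4 * Suc k - 4 = ?e - 8" using h by auto
    show "(e - 4 * Suc k, e - 4 * Suc k - 1) \<in> T \<and>
      (6 \<le> e - 4 * Suc k \<longrightarrow> (e - 4 * Suc k - 1, e - 4 * Suc k - 4) \<in> T)"
    proof (intro conjI impI)
      show "(e - 4 * Suc k, e - 4 * Suc k - 1) \<in> T" using c eq by simp
      assume h6: "6 \<le> e - 4 * Suc k"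
      have h6': "6 \<le> ?e - 4" using h6 eq(1) by simp
      have ev2: "even (?e - 4)" "6 \<le> ?e - 4" "?e - 4 + 2 \<le> N"
        using h6' ev(1) apply presburger using h6' apply simp using ev(3) by linarith
      have "f0 (?e - 4, ?e - 4 - 1) = (?e - 4 - 1, ?e - 4 - 4)" by (rule Z_P1[OF ev2])
      moreover have "?e - 4 - 1 = ?e - 5" "?e - 4 - 4 = ?e - 8" by auto
      ultimately have "f0 (?e - 4, ?e - 5) = (?e - 5, ?e - 8)" by simp
      then have "(?e - 5, ?e - 8) \<in> T" using clD[OF assms(1) c] by blast
      then show "(e - 4 * Suc k - 1, e - 4 * Suc k - 4) \<in> T" using eq by simp
    qed
  qed
qed

lemma Z_Pclos:
  assumes "cl f0 T" "even e" "2 \<le> e" "e + 2 \<le> N" "(e, e - 1) \<in> T"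
    and "even e'" "2 \<le> e'" "e' \<le> e" "(e - e') mod 4 = 0"
  shows "(e', e' - 1) \<in> T \<and> (6 \<le> e' \<longrightarrow> (e' - 1, e' - 4) \<in> T)"
proof -
  define k where "k = (e - e') div 4"
  have "e' = e - 4 * k" "4 * k + 2 \<le> e" using assms(7-9) unfolding k_def by presburger+
  then show ?thesis using Z_Pchain[OF assms(1-5), of k] by simp
qed

lemma Z_Qchain:
  assumes "cl f0 T" "(0, 3) \<in> T"
  shows "2 * k + 4 \<le> N \<longrightarrow> (2 * k, 2 * k + 3) \<in> T \<and> (2 * k + 3, 2 * k + 2) \<in> T"
proof (induction k)
  case 0
  have "f0 (0, 0 + 3) = (0 + 3, 0 + 2)" using Z_Q1[of 0] N6 by simp
  then show ?case using assms clD[OF assms(1)] by simp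
next
  case (Suc k)
  show ?case
  proof (intro impI)
    assume h: "2 * Suc k + 4 \<le> N"
    let ?e = "2 * k"
    have m: "(?e + 3, ?e + 2) \<in> T" using Suc h by simp
    have "f0 (?e + 3, ?e + 2) = (?e + 2, ?e + 5)" using Z_Q2[of ?e] h by simp
    then have a: "(?e + 2, ?e + 5) \<in> T" using clD[OF assms(1) m] by blast
    have fe: "f0 (?e + 2, ?e + 2 + 3) = (?e + 2 + 3, ?e + 2 + 2)" using Z_Q1[of "?e + 2"] h by simp
    have a': "(?e + 2, ?e + 2 + 3) \<in> T" using a by (simp only: add.assoc numeral_plus_numeral) simp
    have b: "(?e + 2 + 3, ?e + 2 + 2) \<in> T" using clD[OF assms(1) a' fe] .
    have eq: "2 * Suc k = ?e + 2" "2 * Suc k + 3 = ?e + 5" "2 * Suc k + 2 = ?e + 2 + 2"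
      "?e + 2 + 3 = ?e + 5" by simp_all
    show "(2 * Suc k, 2 * Suc k + 3) \<in> T \<and> (2 * Suc k + 3, 2 * Suc k + 2) \<in> T"
      using a b by (simp only: eq)
  qed
qed

lemma Z_cover:
  assumes T: "cl f0 T" and s1: "(0, 1) \<in> T" and s2o: "(1, N - 2) \<in> T \<or> N mod 4 = 2"
  shows "darts (ME N) \<subseteq> T"
proof -
  have A: "(a, a + 1) \<in> T" if "a + 2 \<le> N" for a using Z_Achain[OF T s1] that by blast
  have "(N - 2, N - 2 + 1) \<in> T" using A[of "N - 2"] N6 by simp
  moreover have "N - 2 + 1 = N - 1" using N6 by arith
  ultimately have "(N - 2, N - 1) \<in> T" by simp
  then have A2: "(N - 1, 0) \<in> T" using clD[OF T _ Z_A2] by blast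
  then have A3: "(0, 3) \<in> T" using clD[OF T _ Z_A3] by blast
  have Q: "(e, e + 3) \<in> T \<and> (e + 3, e + 2) \<in> T" if q: "even e" "e + 4 \<le> N" for e
  proof -
    obtain j where j: "e = 2 * j" using q(1) unfolding dvd_def by blast
    show ?thesis using Z_Qchain[OF T A3, of j] j q by simp
  qed
  have ev4: "even (N - 4)" using ev_sub[OF evN, of 4] by simp
  have "(N - 4, N - 4 + 3) \<in> T \<and> (N - 4 + 3, N - 4 + 2) \<in> T" using Q[OF ev4] N6 by simp
  moreover have "N - 4 + 3 = N - 1" "N - 4 + 2 = N - 2" using N6 by arith+
  ultimately have "(N - 1, N - 2) \<in> T" by simp
  then have Q3: "(N - 2, 1) \<in> T" using clD[OF T _ Z_Q3] by blast
  then have Q4: "(1, 0) \<in> T" using clD[OF T _ Z_Q4] by blast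
  then have Q5: "(0, N - 1) \<in> T" using clD[OF T _ Z_Q5] by blast
  then have Q6: "(N - 1, N - 4) \<in> T" using clD[OF T _ Z_Q6] by blast
  then have A3: "(N - 4, N - 5) \<in> T" using clD[OF T _ Z_Q7] by blast
  have s2: "(1, N - 2) \<in> T"
  proof (cases "(1, N - 2) \<in> T")
    case False
    then have m: "N mod 4 = 2" using s2o by blast
    have ev: "even (N - 4)" using ev_sub[OF evN, of 4] by simp
    have l4: "2 \<le> N - 4" "N - 4 + 2 \<le> N" using N6 by linarith+
    have "N - 4 - 1 = N - 5" by linarith
    then have m4: "(N - 4, N - 4 - 1) \<in> T" using A3 by simp
    have "(2, 2 - 1) \<in> T \<and> (6 \<le> (2::nat) \<longrightarrow> (2 - 1, 2 - 4) \<in> T)"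
      by (rule Z_Pclos[OF T ev l4 m4 _ _ l4(1) m42[OF m N6]]) simp_all
    then have "(2, 1) \<in> T" by simp
    then show ?thesis using clD[OF T _ Z_P2a] by blast
  qed
  have B: "(N - 2, N - 3) \<in> T" using clD[OF T s2 Z_P2b] .
  have P: "(e, e - 1) \<in> T \<and> (6 \<le> e \<longrightarrow> (e - 1, e - 4) \<in> T)" if "even e" "2 \<le> e" "e + 2 \<le> N" for e
  proof -
    have ev: "even (N - 4)" "even (N - 2)" using ev_sub[OF evN, of 4] ev_sub[OF evN, of 2] by simp_all
    have l4: "2 \<le> N - 4" "N - 4 + 2 \<le> N" "2 \<le> N - 2" "N - 2 + 2 \<le> N" using N6 by linarith+
    have "N - 4 - 1 = N - 5" "N - 2 - 1 = N - 3" by linarith+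
    then have m4: "(N - 4, N - 4 - 1) \<in> T" and m2: "(N - 2, N - 2 - 1) \<in> T" using A3 B by simp_all
    show ?thesis
    proof (cases "(N - 2 - e) mod 4 = 0")
      case True
      have "e \<le> N - 2" using that(3) by simp
      then show ?thesis by (rule Z_Pclos[OF T ev(2) l4(3,4) m2 that(1,2) _ True])
    next
      case False
      have "even (N - 2 - e)" using ev_sub[OF ev(2) that(1)] .
      then have "(N - 2 - e) mod 4 = 2" using False by (rule mod4a)
      then have c: "2 \<le> N - 2 - e \<and> (N - 2 - e - 2) mod 4 = 0" by (rule mod4b)
      have eq: "N - 2 - e - 2 = N - 4 - e" by arith
      have h1: "e \<le> N - 4" using c by arith
      have h2: "(N - 4 - e) mod 4 = 0" using c unfolding eq by blast
      show ?thesis by (rule Z_Pclos[OF T ev(1) l4(1,2) m4 that(1,2) h1 h2])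
    qed
  qed
  have "(4, 3) \<in> T" using P[of 4] N6 by simp
  then have P4a: "(3, 0) \<in> T" using clD[OF T _ Z_P4a] by blast
  show ?thesis
  proof
    fix d assume d: "d \<in> darts (ME N)"
    obtain a b where ab: "d = (a, b)" by (cases d)
    have "a \<in> {0..<N}" using darts_sub[OF ME_sub] d ab by auto
    then have a: "a < N" by auto
    have "b \<in> neighbors (ME N) a" using d ab by (simp add: darts_iff)
    then have b: "b \<in> {prv N a, nxt N a, chd N a}" using nbr_ME[OF a] by auto
    show "d \<in> T"
    proof -
      consider "b = nxt N a" | "b = prv N a" | "b = chd N a" using b by auto
      then show ?thesis
      proof cases
        case 1
        show ?thesis
        proof (cases "a + 1 = N")
          case True
          then have "a = N - 1" "b = 0" using 1 unfolding nxt_def by auto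
          then show ?thesis using A2 ab by simp
        next
          case False
          then have "b = a + 1" "a + 2 \<le> N" using 1 a unfolding nxt_def by auto
          then show ?thesis using A[of a] ab by simp
        qed
      next
        case 2
        show ?thesis
        proof (cases "a = 0")
          case True
          then show ?thesis using 2 vals(2) Q5 ab by simp
        next
          case False
          then have b1: "b = a - 1" using 2 a unfolding prv_def by auto
          show ?thesis
          proof (cases "even a")
            case True
            then have "a + 2 \<le> N" "2 \<le> a" using a evN False by presburger+
            then show ?thesis using P[of a] True ab b1 by simp
          next
            case odd: False
            then have "a = 1 \<or> (3 \<le> a \<and> a + 1 \<le> N)" using a evN by presburger
            then show ?thesis
            proof (elim disjE)
              assume "a = 1" then show ?thesis using b1 Q4 ab by simp
            next
              assume h: "3 \<le> a \<and> a + 1 \<le> N"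
              then have "even (a - 3)" "a - 3 + 4 \<le> N" using odd by auto
              then have "(a - 3 + 3, a - 3 + 2) \<in> T" using Q[of "a - 3"] by blast
              moreover have "a - 3 + 3 = a" "a - 3 + 2 = a - 1" using h by auto
              ultimately show ?thesis using ab b1 by simp
            qed
          qed
        qed
      next
        case 3
        show ?thesis
        proof (cases "even a")
          case True
          then have "a + 4 \<le> N \<or> a + 2 = N" using a evN by presburger
          then have "a + 4 \<le> N \<or> a = N - 2" by auto
          then show ?thesis
          proof
            assume h: "a + 4 \<le> N"
            then have "b = a + 3" using 3 True unfolding chd_def by auto
            then show ?thesis using Q[of a] True h ab by simp
          next
            assume "a = N - 2" then show ?thesis using 3 vals(6) Q3 ab by simp
          qed
        next
          case False
          then have "a = 1 \<or> a = 3 \<or> a + 1 = N \<or> (5 \<le> a \<and> a + 3 \<le> N)" using a evN by presburger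
          then have "a = 1 \<or> a = 3 \<or> a = N - 1 \<or> (5 \<le> a \<and> a + 3 \<le> N)" by auto
          then show ?thesis
          proof (elim disjE)
            assume "a = 1" then show ?thesis using 3 vals(8) s2 ab by simp
          next
            assume "a = 3" then show ?thesis using 3 vals(7)[of 3] P4a ab by simp
          next
            assume "a = N - 1" then show ?thesis using 3 vals(7)[of "N - 1"] N6 evN Q6 ab by simp
          next
            assume h: "5 \<le> a \<and> a + 3 \<le> N"
            then have "b = a - 3" using 3 False vals(7) by simp
            moreover have "even (a + 1)" "2 \<le> a + 1" "a + 1 + 2 \<le> N" "6 \<le> a + 1" using False h by auto
            ultimately show ?thesis using P[of "a + 1"] ab by simp
          qed
        qed
      qed
    qed
  qed
qed

end

context mdl begin

lemma nf_eq: "E \<noteq> {} \<Longrightarrow> num_faces E \<rho> = card (faces E \<rho>)"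
  unfolding num_faces_def by simp

lemma darts_D: "(1, 2) \<in> darts (MED N)" "(1, N - 2) \<in> darts (MED N)"
proof -
  have "nxt N 1 = 2" "chd N 1 = N - 2" using N6 vals(3,8) by auto
  then have "2 \<in> neighbors (MED N) 1" "N - 2 \<in> neighbors (MED N) 1" using nbr_MED[of 1] N6 by auto
  then show "(1, 2) \<in> darts (MED N)" "(1, N - 2) \<in> darts (MED N)" unfolding darts_iff .
qed

lemma darts_0: "(0, 1) \<in> darts (ME N)" "(1, N - 2) \<in> darts (ME N)"
proof -
  have "nxt N 0 = 1" "chd N 1 = N - 2" using N6 vals(3,8) by auto
  then have "1 \<in> neighbors (ME N) 0" "N - 2 \<in> neighbors (ME N) 1" using nbr_ME[of 0] nbr_ME[of 1] N6 by auto
  then show "(0, 1) \<in> darts (ME N)" "(1, N - 2) \<in> darts (ME N)" unfolding darts_iff .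
qed

lemma facesD: "num_faces (MED N) (rhoD N) \<le> (if N mod 4 = 2 then 1 else 2)"
proof -
  have fin: "finite {1..<N}" by simp
  have ne: "MED N \<noteq> {}" using darts_ne(2) unfolding darts_def by auto
  show ?thesis
  proof (cases "N mod 4 = 2")
    case True
    have "darts (MED N) \<subseteq> orb fD (1, 2)"
      using D_cover[OF cl_orb orb_self] True by blast
    then have "card (faces (MED N) (rhoD N)) \<le> card {(1::nat, 2::nat)}"
      using darts_D by (intro faces_card_le[OF rsD MED_sub fin]) auto
    then show ?thesis using True nf_eq[OF ne] by simp
  next
    case False
    let ?U = "orb fD (1, 2) \<union> orb fD (1, N - 2)"
    have "darts (MED N) \<subseteq> ?U"
      by (rule D_cover) (auto intro: cl_Un cl_orb orb_self)
    then have "card (faces (MED N) (rhoD N)) \<le> card {(1::nat, 2::nat), (1, N - 2)}"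
      using darts_D by (intro faces_card_le[OF rsD MED_sub fin]) auto
    also have "\<dots> \<le> 2" by (simp add: card_insert_if)
    finally show ?thesis using False nf_eq[OF ne] by simp
  qed
qed

lemma faces0: "num_faces (ME N) (rho0 N) \<le> (if N mod 4 = 2 then 1 else 2)"
proof -
  have fin: "finite {0..<N}" by simp
  have ne: "ME N \<noteq> {}" using darts_ne(1) unfolding darts_def by auto
  show ?thesis
  proof (cases "N mod 4 = 2")
    case True
    have "darts (ME N) \<subseteq> orb f0 (0, 1)"
      using Z_cover[OF cl_orb orb_self] True by blast
    then have "card (faces (ME N) (rho0 N)) \<le> card {(0::nat, 1::nat)}"
      using darts_0 by (intro faces_card_le[OF rs0 ME_sub fin]) auto
    then show ?thesis using True nf_eq[OF ne] by simp
  next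
    case False
    let ?U = "orb f0 (0, 1) \<union> orb f0 (1, N - 2)"
    have "darts (ME N) \<subseteq> ?U"
      by (rule Z_cover) (auto intro: cl_Un cl_orb orb_self)
    then have "card (faces (ME N) (rho0 N)) \<le> card {(0::nat, 1::nat), (1, N - 2)}"
      using darts_0 by (intro faces_card_le[OF rs0 ME_sub fin]) auto
    also have "\<dots> \<le> 2" by (simp add: card_insert_if)
    finally show ?thesis using False nf_eq[OF ne] by simp
  qed
qed

end

definition psi :: "nat \<Rightarrow> nat \<Rightarrow> nat \<Rightarrow> nat" where
  "psi N v y = (if odd v then (if y + v \<le> N then y + v else y + v - N)
                else (if y < v then v - y else v + N - y))"

lemma odd_sub: "odd (a::nat) \<Longrightarrow> even b \<Longrightarrow> b \<le> a \<Longrightarrow> odd (a - b)"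
  by presburger
lemma odd_half: "odd (a::nat) \<Longrightarrow> 2 * ((a + 1) div 2) - 1 = a"
  by presburger
lemma odd_ne: "odd (a::nat) \<Longrightarrow> even N \<Longrightarrow> a + 2 \<noteq> N"
  by presburger

lemma t1:
  fixes x v N P Q :: nat
  assumes "P = (if x + v \<le> N then x + v else x + v - N)" "Q = (if x + 3 + v \<le> N then x + 3 + v else x + 3 + v - N)"
   "1 \<le> P" "P \<le> N" "P + 2 \<noteq> N" "P \<noteq> N" "1 \<le> v" "v \<le> N" "x + 3 < N"
  shows "Q = (if P + 1 = N then 2 else P + 3)"
  using assms by (auto split: if_splits)
lemma t2:
  fixes x v N P Q :: nat
  assumes "P = (if x + v \<le> N then x + v else x + v - N)" "Q = (if x + 3 - N + v \<le> N then x + 3 - N + v else x + 3 - N + v - N)"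
   "1 \<le> P" "P \<le> N" "P + 2 \<noteq> N" "P \<noteq> N" "1 \<le> v" "v \<le> N" "\<not> x + 3 < N" "x < N"
  shows "Q = (if P + 1 = N then 2 else P + 3)"
  using assms by (auto split: if_splits; arith)
lemma t3:
  fixes x v N P Q :: nat
  assumes "P = (if x < v then v - x else v + N - x)" "Q = (if x + 3 < v then v - (x + 3) else v + N - (x + 3))"
   "1 \<le> Q" "Q \<le> N" "Q + 2 \<noteq> N" "Q \<noteq> N" "1 \<le> v" "v \<le> N" "x + 3 < N"
  shows "P = (if Q + 1 = N then 2 else Q + 3)"
  using assms by (auto split: if_splits; arith)
lemma t4:
  fixes x v N P Q :: nat
  assumes "P = (if x < v then v - x else v + N - x)" "Q = (if x + 3 - N < v then v - (x + 3 - N) else v + N - (x + 3 - N))"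
   "1 \<le> Q" "Q \<le> N" "Q + 2 \<noteq> N" "Q \<noteq> N" "1 \<le> v" "v \<le> N" "\<not> x + 3 < N" "x < N"
  shows "P = (if Q + 1 = N then 2 else Q + 3)"
  using assms by (auto split: if_splits; arith)
lemma odd_sub2: "even (a::nat) \<Longrightarrow> odd b \<Longrightarrow> b \<le> a \<Longrightarrow> odd (a - b)"
  by presburger

locale iso = mdl +
  fixes v :: nat
  assumes v: "1 \<le> v" "v \<le> N"
begin

abbreviation "p \<equiv> psi N v"

lemma psi_range: "y < N \<Longrightarrow> p y \<in> {1..N}"
  using v unfolding psi_def by auto

lemma psi0: "p 0 = v"
  using v unfolding psi_def by auto

lemma psi_inj: "inj_on p {0..<N}"
  unfolding inj_on_def psi_def using v by (auto split: if_splits)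

lemma psi_img: "p ` {0..<N} = {1..N}"
proof (rule card_subset_eq)
  show "finite {1..N}" by simp
  show "p ` {0..<N} \<subseteq> {1..N}" using psi_range by auto
  show "card (p ` {0..<N}) = card {1..N}" using card_image[OF psi_inj] by simp
qed

lemma psi_nxt_odd: "odd v \<Longrightarrow> x < N \<Longrightarrow> p (nxt N x) = (if p x = N then 1 else p x + 1)"
  using v N6 unfolding psi_def nxt_def by auto

lemma psi_nxt_even: "even v \<Longrightarrow> x < N \<Longrightarrow> p x = (if p (nxt N x) = N then 1 else p (nxt N x) + 1)"
  using v N6 unfolding psi_def nxt_def by auto

lemma psi_chd_odd:
  assumes "odd v" "even x" "x < N"
  shows "odd (p x) \<and> p (chd N x) = (if p x + 1 = N then 2 else p x + 3)"
proof -
  have o: "odd (p x)"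
  proof (cases "x + v \<le> N")
    case True then show ?thesis using assms unfolding psi_def by simp
  next
    case False
    have "odd (x + v)" using assms by simp
    then show ?thesis using False assms odd_sub[of "x + v" N] evN unfolding psi_def by simp
  qed
  have r: "p x \<in> {1..N}" using psi_range assms by simp
  have ne: "p x + 2 \<noteq> N" using odd_ne[OF o evN] .
  have px: "p x = (if x + v \<le> N then x + v else x + v - N)" using assms(1) unfolding psi_def by simp
  have cx: "chd N x = (if x + 3 < N then x + 3 else x + 3 - N)" using assms(2) unfolding chd_def by simp
  have pc: "p (chd N x) = (if chd N x + v \<le> N then chd N x + v else chd N x + v - N)"
    using assms(1) unfolding psi_def by simp
  have pn: "p x \<noteq> N" using o evN by auto
  have "p (chd N x) = (if p x + 1 = N then 2 else p x + 3)"
  proof (cases "x + 3 < N")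
    case True
    then have c: "chd N x = x + 3" using cx by simp
    have pc': "p (chd N x) = (if x + 3 + v \<le> N then x + 3 + v else x + 3 + v - N)" using pc unfolding c .
    show ?thesis using t1[OF px pc'] r ne pn v True by simp
  next
    case False
    then have c: "chd N x = x + 3 - N" using cx by simp
    have pc': "p (chd N x) = (if x + 3 - N + v \<le> N then x + 3 - N + v else x + 3 - N + v - N)" using pc unfolding c .
    show ?thesis using t2[OF px pc'] r ne pn v False assms(3) by simp
  qed
  then show ?thesis using o by simp
qed

lemma psi_chd_even:
  assumes "even v" "even x" "x < N"
  shows "odd (p (chd N x)) \<and> p x = (if p (chd N x) + 1 = N then 2 else p (chd N x) + 3)"
proof -
  have c: "chd N x < N" "odd (chd N x)" using lt(3) chd_par assms by auto
  have o: "odd (p (chd N x))"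
  proof (cases "chd N x < v")
    case True
    then show ?thesis using assms(1) c odd_sub2[of v "chd N x"] unfolding psi_def by simp
  next
    case False
    have "even (v + N)" using assms(1) evN by simp
    moreover have "chd N x \<le> v + N" using c by simp
    ultimately have "odd (v + N - chd N x)" using odd_sub2 c(2) by blast
    then show ?thesis using False assms(1) unfolding psi_def by simp
  qed
  have r: "p (chd N x) \<in> {1..N}" using psi_range c by simp
  have ne: "p (chd N x) + 2 \<noteq> N" using odd_ne[OF o evN] .
  have px: "p x = (if x < v then v - x else v + N - x)" using assms(1) unfolding psi_def by simp
  have cx: "chd N x = (if x + 3 < N then x + 3 else x + 3 - N)" using assms(2) unfolding chd_def by simp
  have pc: "p (chd N x) = (if chd N x < v then v - chd N x else v + N - chd N x)"
    using assms(1) unfolding psi_def by simp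
  have pn: "p (chd N x) \<noteq> N" using o evN by auto
  have "p x = (if p (chd N x) + 1 = N then 2 else p (chd N x) + 3)"
  proof (cases "x + 3 < N")
    case True
    then have c: "chd N x = x + 3" using cx by simp
    have pc': "p (chd N x) = (if x + 3 < v then v - (x + 3) else v + N - (x + 3))" using pc unfolding c .
    show ?thesis using t3[OF px pc'] r ne pn v True by simp
  next
    case False
    then have c: "chd N x = x + 3 - N" using cx by simp
    have pc': "p (chd N x) = (if x + 3 - N < v then v - (x + 3 - N) else v + N - (x + 3 - N))" using pc unfolding c .
    show ?thesis using t4[OF px pc'] r ne pn v False assms(3) by simp
  qed
  then show ?thesis using o by simp
qed

end

context iso begin

lemma mod_cyc: "i \<in> {1..N} \<Longrightarrow> i mod N + 1 = (if i = N then 1 else i + 1)"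
  by auto

lemma mod_chd: "i \<in> {1..N div 2} \<Longrightarrow> (2 * i + 1) mod N + 1 = (if 2 * i = N then 2 else 2 * i + 2)"
proof -
  assume i: "i \<in> {1..N div 2}"
  show ?thesis
  proof (cases "2 * i = N")
    case True
    then have "(2 * i + 1) mod N = 1" using N6 by (simp add: mod_Suc)
    then show ?thesis using True by simp
  next
    case False
    then have "2 * i + 1 < N" using i evN by auto
    then show ?thesis using False by simp
  qed
qed

lemma nbE: "neckband_E (N div 2) = (\<lambda>i. {i, if i = N then 1 else i + 1}) ` {1..N}
   \<union> (\<lambda>i. {2 * i - 1, if 2 * i = N then 2 else 2 * i + 2}) ` {1..N div 2}"
proof -
  have h: "2 * (N div 2) = N" using evN by simp
  have a: "{{i, i mod N + 1} | i. i \<in> {1..N}} = (\<lambda>i. {i, if i = N then 1 else i + 1}) ` {1..N}"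
  proof -
    have "{{i, i mod N + 1} | i. i \<in> {1..N}} = (\<lambda>i. {i, i mod N + 1}) ` {1..N}" by blast
    also have "\<dots> = (\<lambda>i. {i, if i = N then 1 else i + 1}) ` {1..N}"
      by (rule image_cong) (simp_all only: mod_cyc)
    finally show ?thesis .
  qed
  have b: "{{2 * i - 1, (2 * i + 1) mod N + 1} | i. i \<in> {1..N div 2}} =
      (\<lambda>i. {2 * i - 1, if 2 * i = N then 2 else 2 * i + 2}) ` {1..N div 2}"
  proof -
    have "{{2 * i - 1, (2 * i + 1) mod N + 1} | i. i \<in> {1..N div 2}} =
        (\<lambda>i. {2 * i - 1, (2 * i + 1) mod N + 1}) ` {1..N div 2}" by blast
    also have "\<dots> = (\<lambda>i. {2 * i - 1, if 2 * i = N then 2 else 2 * i + 2}) ` {1..N div 2}"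
      by (rule image_cong) (simp_all only: mod_chd)
    finally show ?thesis .
  qed
  show ?thesis unfolding neckband_E_def h a b ..
qed

lemma edge_map: "e \<in> ME N \<Longrightarrow> p ` e \<in> neckband_E (N div 2)"
proof -
  assume "e \<in> ME N"
  then consider x where "x < N" "e = {x, nxt N x}" | x where "x < N" "even x" "e = {x, chd N x}"
    unfolding ME_def by blast
  then show ?thesis
  proof cases
    case 1
    have pe: "p ` e = {p x, p (nxt N x)}" using 1 by simp
    show ?thesis
    proof (cases "odd v")
      case True
      have "p ` e = (\<lambda>i. {i, if i = N then 1 else i + 1}) (p x)" using pe psi_nxt_odd[OF True 1(1)] by simp
      moreover have "p x \<in> {1..N}" using psi_range 1(1) by simp
      ultimately show ?thesis unfolding nbE by blast
    next
      case False
      have "p ` e = (\<lambda>i. {i, if i = N then 1 else i + 1}) (p (nxt N x))"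
        using pe psi_nxt_even[OF _ 1(1)] False by (simp add: insert_commute)
      moreover have "p (nxt N x) \<in> {1..N}" using psi_range lt(2)[OF 1(1)] by simp
      ultimately show ?thesis unfolding nbE by blast
    qed
  next
    case 2
    have pe: "p ` e = {p x, p (chd N x)}" using 2 by simp
    show ?thesis
    proof (cases "odd v")
      case True
      have c: "odd (p x)" "p (chd N x) = (if p x + 1 = N then 2 else p x + 3)"
        using psi_chd_odd[OF True 2(2,1)] by auto
      define i where "i = (p x + 1) div 2"
      have r: "p x \<in> {1..N}" using psi_range 2(1) by simp
      have i1: "2 * i - 1 = p x" unfolding i_def using odd_half[OF c(1)] .
      have i2: "2 * i = p x + 1" using i1 c(1) r by auto
      have i3: "i \<in> {1..N div 2}" using i2 r evN by auto
      have "p ` e = {2 * i - 1, if 2 * i = N then 2 else 2 * i + 2}"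
        unfolding pe c(2) i1 using i2 by auto
      then show ?thesis unfolding nbE using i3 by blast
    next
      case False
      have c: "odd (p (chd N x))" "p x = (if p (chd N x) + 1 = N then 2 else p (chd N x) + 3)"
        using psi_chd_even[OF _ 2(2,1)] False by auto
      define i where "i = (p (chd N x) + 1) div 2"
      have r: "p (chd N x) \<in> {1..N}" using psi_range lt(3)[OF 2(1)] by simp
      have i1: "2 * i - 1 = p (chd N x)" unfolding i_def using odd_half[OF c(1)] .
      have i2: "2 * i = p (chd N x) + 1" using i1 c(1) r by auto
      have i3: "i \<in> {1..N div 2}" using i2 r evN by auto
      have "p ` e = {2 * i - 1, if 2 * i = N then 2 else 2 * i + 2}"
        unfolding pe c(2) i1 using i2 by auto
      then show ?thesis unfolding nbE using i3 by blast
    qed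
  qed
qed

lemma card_nb: "card (neckband_E (N div 2)) \<le> N + N div 2" "finite (neckband_E (N div 2))"
proof -
  show "card (neckband_E (N div 2)) \<le> N + N div 2" unfolding nbE
    by (rule order_trans[OF card_Un_le]) (intro add_mono order_trans[OF card_image_le]; simp)
  show "finite (neckband_E (N div 2))" unfolding nbE by simp
qed

sublocale T: transp p "{0..<N}" "ME N"
  by unfold_locales (use psi_inj ME_sub in auto)

sublocale TD: transp p "{1..<N}" "MED N"
  by unfold_locales (use psi_inj MED_sub in \<open>auto intro: inj_on_subset\<close>)

lemma img_E: "(`) p ` ME N = neckband_E (N div 2)"
proof (rule card_seteq)
  show "finite (neckband_E (N div 2))" by (rule card_nb(2))
  show "(`) p ` ME N \<subseteq> neckband_E (N div 2)" using edge_map by auto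
  show "card (neckband_E (N div 2)) \<le> card ((`) p ` ME N)" using card_nb(1) T.card_E card_ME by simp
qed

lemma img_V: "p ` {0..<N} = {1..N}" by (rule psi_img)

lemma img_VD: "p ` {1..<N} = {1..N} - {v}"
proof -
  have "{1..<N} = {0..<N} - {0}" by auto
  then have "p ` {1..<N} = p ` {0..<N} - p ` {0}"
    using inj_on_image_set_diff[OF psi_inj] by auto
  then show ?thesis using psi_img psi0 by simp
qed

lemma img_ED: "(`) p ` MED N = {e \<in> neckband_E (N div 2). v \<notin> e}"
proof -
  have "v \<in> p ` e \<longleftrightarrow> 0 \<in> e" if "e \<in> ME N" for e
  proof -
    have eN: "e \<subseteq> {0..<N}" using ME_sub that by auto
    show ?thesis
    proof
      assume "v \<in> p ` e"
      then obtain y where y: "y \<in> e" "p y = p 0" using psi0 by auto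
      have "y \<in> {0..<N}" "(0::nat) \<in> {0..<N}" using y(1) eN N6 by auto
      then have "y = 0" using inj_onD[OF psi_inj y(2)] by blast
      then show "0 \<in> e" using y(1) by simp
    next
      assume "0 \<in> e" then show "v \<in> p ` e" using psi0 by force
    qed
  qed
  then show ?thesis unfolding MED_def img_E[symmetric] by auto
qed

end



lemma gen_ineq:
  fixes n F :: nat
  assumes "F \<le> (if odd n then 1 else 2)"
  shows "(2 + int n - int F) div 2 \<ge> (1 + int n) div 2"
proof (cases "odd n")
  case True
  then have "2 + int n - int F \<ge> 1 + int n" using assms by simp
  then show ?thesis by (rule zdiv_mono1) simp
next
  case False
  then obtain k where k: "n = 2 * k" by auto
  have "2 + int n - int F \<ge> 2 * int k" using assms False k by simp
  then have "(2 + int n - int F) div 2 \<ge> (2 * int k) div 2" by (rule zdiv_mono1) simp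
  moreover have "(1 + int n) div 2 = int k" using k by simp
  ultimately show ?thesis by simp
qed

lemma gen_ineqD:
  fixes n F :: nat
  assumes "F \<le> (if odd n then 1 else 2)"
  shows "(int n - int F) div 2 \<ge> (int n - 1) div 2"
proof (cases "odd n")
  case True
  then have "int n - int F \<ge> int n - 1" using assms by simp
  then show ?thesis by (rule zdiv_mono1) simp
next
  case False
  then obtain k where k: "n = 2 * k" by auto
  have "int n - int F \<ge> 2 * int k - 2" using assms False k by simp
  then have "(int n - int F) div 2 \<ge> (2 * int k - 2) div 2" by (rule zdiv_mono1) simp
  moreover have "(2 * int k - 2) div 2 = int k - 1" by simp
  moreover have "(int n - 1) div 2 = int k - 1" using k by simp
  ultimately show ?thesis by simp
qed

context iso begin

lemma mod4_odd: "(N mod 4 = 2) = odd (N div 2)"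
  using evN by presburger

lemma final_G: "max_genus {1..N} (neckband_E (N div 2)) = (1 + int (N div 2)) div 2"
proof -
  let ?r = "tr_rot p {0..<N} (rho0 N)"
  have V: "{1..N} = p ` {0..<N}" using psi_img by simp
  have E: "neckband_E (N div 2) = (`) p ` ME N" using img_E by simp
  have cV: "card {1..N} = N" by simp
  have cE: "card (neckband_E (N div 2)) = N + N div 2" unfolding E T.card_E card_ME ..
  have rot: "is_rotation_system {1..N} (neckband_E (N div 2)) ?r"
    unfolding V E by (rule T.rot_transport[OF rs0])
  have sub: "\<forall>e\<in>neckband_E (N div 2). e \<subseteq> {1..N}" unfolding V E by (rule T.sub')
  have dne: "darts (neckband_E (N div 2)) \<noteq> {}" unfolding E T.darts_img using darts_ne(1) by simp
  have F: "num_faces (neckband_E (N div 2)) ?r \<le> (if odd (N div 2) then 1 else 2)"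
    using T.faces_transport[OF rs0] faces0 mod4_odd unfolding E by simp
  have NN: "int N = 2 * int (N div 2)" using evN by (auto elim!: evenE)
  have "emb_genus {1..N} (neckband_E (N div 2)) ?r = (2 + int (N div 2) - int (num_faces (neckband_E (N div 2)) ?r)) div 2"
    unfolding emb_genus_def cV cE using NN by simp
  also have "\<dots> \<ge> (1 + int (N div 2)) div 2" by (rule gen_ineq[OF F])
  finally have g: "emb_genus {1..N} (neckband_E (N div 2)) ?r \<ge> (1 - int (card {1..N}) + int (card (neckband_E (N div 2)))) div 2"
    unfolding cV cE using NN by simp
  have "max_genus {1..N} (neckband_E (N div 2)) = (1 - int (card {1..N}) + int (card (neckband_E (N div 2)))) div 2"
    by (rule max_genus_eq[OF _ sub dne rot g]) simp
  then show ?thesis unfolding cV cE using NN by simp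
qed

lemma final_D:
  "graph_connected ({1..N} - {v}) {e \<in> neckband_E (N div 2). v \<notin> e} \<and>
   max_genus ({1..N} - {v}) {e \<in> neckband_E (N div 2). v \<notin> e} = (int (N div 2) - 1) div 2"
proof -
  let ?V = "{1..N} - {v}" and ?E = "{e \<in> neckband_E (N div 2). v \<notin> e}"
  let ?r = "tr_rot p {1..<N} (rhoD N)"
  have V: "?V = p ` {1..<N}" using img_VD by simp
  have E: "?E = (`) p ` MED N" using img_ED by simp
  have cV: "card ?V = N - 1" unfolding V TD.card_V by simp
  have cE: "card ?E = N + N div 2 - 3" unfolding E TD.card_E card_MED ..
  have rot: "is_rotation_system ?V ?E ?r"
    unfolding V E by (rule TD.rot_transport[OF rsD])
  have sub: "\<forall>e\<in>?E. e \<subseteq> ?V" unfolding V E by (rule TD.sub')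
  have dne: "darts ?E \<noteq> {}" unfolding E TD.darts_img using darts_ne(2) by simp
  have F: "num_faces ?E ?r \<le> (if odd (N div 2) then 1 else 2)"
    using TD.faces_transport[OF rsD] facesD mod4_odd unfolding E by simp
  have NN: "int N = 2 * int (N div 2)" using evN by (auto elim!: evenE)
  have i1: "int (N - 1) = int N - 1" using N6 by simp
  have i2: "int (N + N div 2 - 3) = int N + int (N div 2) - 3" using N6 by simp
  have "emb_genus ?V ?E ?r = (int (N div 2) - int (num_faces ?E ?r)) div 2"
    unfolding emb_genus_def cV cE i1 i2 using NN by simp
  also have "\<dots> \<ge> (int (N div 2) - 1) div 2" by (rule gen_ineqD[OF F])
  finally have g: "emb_genus ?V ?E ?r \<ge> (1 - int (card ?V) + int (card ?E)) div 2"
    unfolding cV cE i1 i2 using NN by simp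
  have "max_genus ?V ?E = (1 - int (card ?V) + int (card ?E)) div 2"
    by (rule max_genus_eq[OF _ sub dne rot g]) simp
  then have mg: "max_genus ?V ?E = (int (N div 2) - 1) div 2" unfolding cV cE i1 i2 using NN by simp
  have "graph_connected ?V ?E" unfolding V E by (rule TD.conn_transport[OF conn])
  then show ?thesis using mg by simp
qed

end

theorem theorem2p1:
  fixes n v :: nat
  assumes "n \<ge> 3" and "v \<in> neckband_V n"
  shows "graph_connected (fst (delete_vertex (neckband_V n) (neckband_E n) v))
                         (snd (delete_vertex (neckband_V n) (neckband_E n) v))
       \<and> max_genus (fst (delete_vertex (neckband_V n) (neckband_E n) v))
                   (snd (delete_vertex (neckband_V n) (neckband_E n) v))
         = max_genus (neckband_V n) (neckband_E n) - 1"
proof -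
  interpret I: iso "2 * n" v
    by unfold_locales (use assms in \<open>auto simp: neckband_V_def\<close>)
  have h: "2 * n div 2 = n" by simp
  have G: "max_genus {1..2 * n} (neckband_E n) = (1 + int n) div 2" using I.final_G unfolding h .
  have D: "graph_connected ({1..2 * n} - {v}) {e \<in> neckband_E n. v \<notin> e} \<and>
     max_genus ({1..2 * n} - {v}) {e \<in> neckband_E n. v \<notin> e} = (int n - 1) div 2"
    using I.final_D unfolding h .
  have "(int n - 1) div 2 = (1 + int n) div 2 - 1" by presburger
  then show ?thesis using G D unfolding delete_vertex_def neckband_V_def by simp
qed

end
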